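(* Let $p\ge0$, let $m_1,\dots,m_p$ be non-negative integers, and let $a,b,d,c_1,\dots,c_p$ be complex parameters such that no denominators below vanish and $|dq^{-|m|}/ab|<1$. Then \begin{multline*}\sum_{y=0}^\infty \frac{(a,b)_y}{(q,d)_y} \prod_{i=1}^p\frac{(c_iq^{m_i})_{y}}{(c_i)_{y}} \left(\frac{dq^{-|m|}}{ab}\right)^{y}=\frac{(d/a,d/b)_\infty} {(d,q^{-|m|}d/ab)_\infty} \prod_{i=1}^p(q^{-m_i}d/c_i)_{m_i}\\ \times\sum_{x_1,\dots,x_p=0}^{m_1,\dots,m_p} \frac{\Delta(cq^x)}{\Delta(c)}\,q^{|x|} \prod_{i=1}^p\frac{(c_i/a,c_i/b)_{x_i}} {(c_i,qc_i/d)_{x_i}}\prod_{i,k=1}^p\frac{(q^{-m_k}c_i/c_k)_{x_i}} {(qc_i/c_k)_{x_i}}. \end{multline*}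
   Context: $q$ is a fixed complex number with $0<|q|<1$. For $k\ge 0$, $(a)_k=(1-a)(1-aq)\cdots(1-aq^{k-1})$, and for $k<0$, $(a)_k=1/\big((1-aq^{-1})\cdots(1-aq^{k})\big)$; $(a)_\infty=\prod_{j\ge0}(1-aq^j)$; $(a_1,\dots,a_r)_k=(a_1)_k\cdots(a_r)_k$ (also for $k=\infty$). $|m|=m_1+\dots+m_p$, $|x|=x_1+\dots+x_p$. $\frac{\Delta(cq^x)}{\Delta(c)}=\prod_{1\le i<j\le p}\frac{c_iq^{x_i}-c_jq^{x_j}}{c_i-c_j}$. The sum $\sum_{x_1,\dots,x_p=0}^{m_1,\dots,m_p}$ runs over integers $0\le x_i\le m_i$. *)

theory Defs
  imports "HOL-Analysis.Analysis"
begin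

definition qpoch :: "complex \<Rightarrow> complex \<Rightarrow> nat \<Rightarrow> complex" where
  "qpoch q a k = (\<Prod>j<k. 1 - a * q ^ j)"

definition qpoch_inf :: "complex \<Rightarrow> complex \<Rightarrow> complex" where
  "qpoch_inf q a = lim (\<lambda>n. \<Prod>j<n. 1 - a * q ^ j)"

text \<open>Vandermonde quotient Delta(c q^x)/Delta(c), indices 0..p-1.\<close>
definition vdm_quot :: "complex \<Rightarrow> nat \<Rightarrow> (nat \<Rightarrow> complex) \<Rightarrow> (nat \<Rightarrow> nat) \<Rightarrow> complex" where
  "vdm_quot q p c x = (\<Prod>j<p. \<Prod>i<j. (c i * q ^ x i - c j * q ^ x j) / (c i - c j))"

end

theory Submission
  imports Defs "HOL-Computational_Algebra.Polynomial"
begin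

lemma qpoch_0[simp]: "qpoch q a 0 = 1" by (simp add: qpoch_def)
lemma qpoch_Suc: "qpoch q a (Suc k) = qpoch q a k * (1 - a * q ^ k)" by (simp add: qpoch_def)
lemma qpoch_add: "qpoch q a (n + k) = qpoch q a n * qpoch q (a * q ^ n) k"
  by (induction k) (simp_all add: qpoch_Suc power_add mult_ac)
lemma qpoch_Suc': "qpoch q a (Suc k) = (1 - a) * qpoch q (a*q) k"
  using qpoch_add[of q a 1 k] by (simp add: qpoch_def)
lemma qpoch_eq_0_iff: "qpoch q a k = 0 \<longleftrightarrow> (\<exists>j<k. a * q^j = 1)"
  by (auto simp add: qpoch_def)
lemma qpoch_nz_le: "qpoch q a n \<noteq> 0 \<Longrightarrow> k \<le> n \<Longrightarrow> qpoch q a k \<noteq> 0"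
  by (auto simp add: qpoch_eq_0_iff)

context
  fixes q :: complex
  assumes q0: "q \<noteq> 0" and q1: "norm q < 1"
begin

lemma qfactors_convergent_prod: "convergent_prod (\<lambda>j. 1 - a * q ^ j)"
proof -
  have "summable (\<lambda>j. norm a * norm q ^ j)"
    using q1 by (intro summable_mult summable_geometric) auto
  hence "summable (\<lambda>j. norm ((1 - a * q ^ j) - 1))"
    by (simp add: norm_mult norm_power)
  hence "abs_convergent_prod (\<lambda>j. 1 - a * q ^ j)"
    by (rule summable_imp_abs_convergent_prod)
  thus ?thesis by (rule abs_convergent_prod_imp_convergent_prod)
qed

lemma qpoch_LIMSEQ_prodinf: "(\<lambda>n. qpoch q a n) \<longlonglongrightarrow> prodinf (\<lambda>j. 1 - a * q ^ j)"
proof -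
  have "(\<lambda>n. \<Prod>j\<le>n. 1 - a * q ^ j) \<longlonglongrightarrow> prodinf (\<lambda>j. 1 - a * q ^ j)"
    by (rule convergent_prod_LIMSEQ[OF qfactors_convergent_prod])
  hence "(\<lambda>n. qpoch q a (Suc n)) \<longlonglongrightarrow> prodinf (\<lambda>j. 1 - a * q ^ j)"
    by (simp add: qpoch_def lessThan_Suc_atMost)
  thus ?thesis by (simp add: filterlim_sequentially_Suc)
qed

lemma qpoch_inf_eq: "qpoch_inf q a = prodinf (\<lambda>j. 1 - a * q ^ j)"
  unfolding qpoch_inf_def using qpoch_LIMSEQ_prodinf[of a] by (simp add: qpoch_def limI)

lemma qpoch_LIMSEQ: "(\<lambda>n. qpoch q a n) \<longlonglongrightarrow> qpoch_inf q a"
  using qpoch_LIMSEQ_prodinf qpoch_inf_eq by simp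

lemma qpoch_inf_split: "qpoch_inf q a = qpoch q a n * qpoch_inf q (a * q ^ n)"
proof -
  have "(\<lambda>k. qpoch q a (k + n)) \<longlonglongrightarrow> qpoch_inf q a"
    by (rule LIMSEQ_ignore_initial_segment[OF qpoch_LIMSEQ])
  moreover have "(\<lambda>k. qpoch q a (k + n)) \<longlonglongrightarrow> qpoch q a n * qpoch_inf q (a * q ^ n)"
    using qpoch_add[of q a n] by (simp add: add.commute[of _ n]) (intro tendsto_intros qpoch_LIMSEQ)
  ultimately show ?thesis using LIMSEQ_unique by blast
qed

lemma qpoch_inf_nz: "(\<And>j. a * q ^ j \<noteq> 1) \<Longrightarrow> qpoch_inf q a \<noteq> 0"
  unfolding qpoch_inf_eq by (rule prodinf_nonzero[OF qfactors_convergent_prod]) auto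

lemma qpoch_inf_nz_small: "norm a < 1 \<Longrightarrow> qpoch_inf q a \<noteq> 0"
proof (rule qpoch_inf_nz)
  fix j assume "norm a < 1"
  have "norm (a * q ^ j) = norm a * norm q ^ j" by (simp add: norm_mult norm_power)
  also have "\<dots> \<le> norm a * 1" using q1 by (intro mult_left_mono power_le_one) auto
  finally show "a * q ^ j \<noteq> 1" using \<open>norm a < 1\<close> by auto
qed

lemma qpoch_inf_nz_all: "(\<And>n. qpoch q a n \<noteq> 0) \<Longrightarrow> qpoch_inf q a \<noteq> 0"
proof (rule qpoch_inf_nz)
  fix j assume "\<And>n. qpoch q a n \<noteq> 0"
  from this[of "Suc j"] show "a * q ^ j \<noteq> 1" by (auto simp: qpoch_eq_0_iff)
qed

lemma norm_q_pow_le: "norm (q ^ n) \<le> 1"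
  using q1 by (simp add: norm_power power_le_one)

lemma q_pow_neq_1: "n > 0 \<Longrightarrow> q ^ n \<noteq> 1"
proof
  assume "n > 0" "q ^ n = 1"
  hence "norm q ^ n = 1" by (metis norm_one norm_power)
  moreover have "norm q ^ n < 1" using q1 \<open>n>0\<close> by (simp add: power_less_one_iff)
  ultimately show False by simp
qed

lemma qpoch_q_nz: "qpoch q q n \<noteq> 0"
  by (auto simp: qpoch_eq_0_iff power_Suc[symmetric] q_pow_neq_1 simp del: power_Suc)

lemma qpoch_lower_bound:
  assumes "norm x \<le> (1 - norm q) / 2"
  shows "norm (qpoch q x k) \<ge> 1/2"
proof -
  have nq: "norm q < 1" "0 \<le> norm q" using q1 by auto
  have "(\<Sum>j<k. norm x * norm q ^ j) = norm x * (\<Sum>j<k. norm q ^ j)" by (simp add: sum_distrib_left)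
  also have "(\<Sum>j<k. norm q ^ j) \<le> 1 / (1 - norm q)"
  proof -
    have "(\<Sum>j<k. norm q ^ j) \<le> (\<Sum>j. norm q ^ j)"
      using nq by (intro sum_le_suminf summable_geometric) auto
    also have "\<dots> = 1 / (1 - norm q)" using nq by (simp add: suminf_geometric)
    finally show ?thesis .
  qed
  hence "norm x * (\<Sum>j<k. norm q ^ j) \<le> norm x * (1 / (1 - norm q))"
    by (intro mult_left_mono) auto
  also have "\<dots> \<le> 1/2" using assms nq by (simp add: field_simps)
  finally have S: "(\<Sum>j<k. norm x * norm q ^ j) \<le> 1/2" .
  have f01: "norm x * norm q ^ j \<in> {0..1}" for j
  proof -
    have "norm x * norm q ^ j \<le> norm x * 1" using nq by (intro mult_left_mono power_le_one) auto
    also have "norm x \<le> 1"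
    proof -
      have h1: "norm x \<le> (1 - norm q) / 2" by (rule assms)
      have h2: "0 \<le> norm q" by simp
      from h1 have "norm x * 2 \<le> 1 - norm q" by (simp add: field_simps)
      with h2 show ?thesis by linarith
    qed
    finally show ?thesis by auto
  qed
  have "1 - (\<Sum>j<k. norm x * norm q ^ j) \<le> (\<Prod>j<k. 1 - norm x * norm q ^ j)"
    by (rule Weierstrass_prod_ineq) (use f01 in auto)
  also have "\<dots> \<le> (\<Prod>j<k. norm (1 - x * q ^ j))"
  proof (rule prod_mono)
    fix j assume "j \<in> {..<k}"
    have "norm (1::complex) - norm (x * q ^ j) \<le> norm (1 - x * q ^ j)" by (rule norm_triangle_ineq2)
    thus "0 \<le> 1 - norm x * norm q ^ j \<and> 1 - norm x * norm q ^ j \<le> norm (1 - x * q ^ j)"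
      using f01[of j] by (auto simp: norm_mult norm_power)
  qed
  also have "\<dots> = norm (qpoch q x k)" by (simp add: qpoch_def prod_norm)
  finally show ?thesis using S by linarith
qed

end


definition qgt :: "complex \<Rightarrow> complex \<Rightarrow> complex \<Rightarrow> complex \<Rightarrow> nat \<Rightarrow> complex" where
  "qgt q A B C n = qpoch q A n * qpoch q B n / (qpoch q q n * qpoch q C n) * (C/(A*B))^n"

lemma qgt_Suc: "qgt q A B C (Suc n) =
   qgt q A B C n * ((1 - A*q^n)*(1-B*q^n)/((1 - q*q^n)*(1 - C*q^n)) * (C/(A*B)))"
  by (simp add: qgt_def qpoch_Suc divide_inverse inverse_mult_distrib mult_ac)

lemma qpoch_tendsto: "(f \<longlongrightarrow> x) F \<Longrightarrow> ((\<lambda>n. qpoch q (f n) k) \<longlongrightarrow> qpoch q x k) F"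
  unfolding qpoch_def by (intro tendsto_intros)

lemma alg1_gen:
  fixes t x X A B u vv :: complex
  assumes "u\<noteq>0" "vv\<noteq>0" "A\<noteq>0" "B\<noteq>0" "u = 1 - x" "vv = 1 - x*X"
  shows "-t*(1-X) + (1-x/(A*B))*t - (1-x/A)*(1-x/B)/u * (t*(X*u/vv))
     = - (t*((1-A*X)*(1-B*X)/vv)*(x/(A*B)))"
proof -
  have "-t*(1-X) + (1-x/(A*B))*t - (1-x/A)*(1-x/B)/u * (t*(X*u/vv))
     = t * (X* vv*(A*B) - x* vv - (A-x)*(B-x)*X) / (vv*(A*B))"
    using assms(1-4) by (simp add: field_simps)
  also have "X* vv*(A*B) - x* vv - (A-x)*(B-x)*X = - x*(1-A*X)*(1-B*X)"
    unfolding assms(6) by (simp add: algebra_simps)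
  also have "t * (- x*(1-A*X)*(1-B*X)) / (vv*(A*B)) = - (t*((1-A*X)*(1-B*X)/vv)*(x/(A*B)))"
    using assms(1-4) by (simp add: field_simps)
  finally show ?thesis .
qed

lemma alg1:
  fixes t x X A B q :: complex
  assumes "1-x\<noteq>0" "1-x*X\<noteq>0" "A\<noteq>0" "B\<noteq>0"
  shows "-t*(1-X) + (1-x/(A*B))*t - (1-x/A)*(1-x/B)/(1-x) * (t*(X*(1-x)/(1-x*X)))
     = - (t*((1-A*X)*(1-B*X)/(1-x*X))*(x/(A*B)))"
  by (rule alg1_gen[OF assms]) auto

lemma alg3:
  fixes a b S K T :: complex
  assumes "a \<noteq> 0" "a * S = K / b * T"
  shows "S = K/(b*a) * T"
proof -
  have "S = (a * S) / a" using assms(1) by simp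
  also have "\<dots> = K/(b*a) * T" unfolding assms(2) by (simp add: divide_inverse inverse_mult_distrib mult_ac)
  finally show ?thesis .
qed

lemma alg2:
  fixes T R vv w z :: complex
  assumes "w \<noteq> 0"
  shows "- (T * (R/vv)*z) = - (T*(R/(w* vv))*z) * w"
  using assms by (simp add: field_simps)

context
  fixes q :: complex
  assumes q0: "q \<noteq> 0" and q1: "norm q < 1"
begin

lemma qpow_tendsto0: "(\<lambda>n. q ^ n) \<longlonglongrightarrow> 0"
  using q1 by (rule LIMSEQ_power_zero)

lemma qgt_summable:
  assumes z: "norm (C/(A*B)) < 1"
  shows "summable (qgt q A B C)"
proof -
  define z where "z = C/(A*B)"
  define \<rho> where "\<rho> n = (1 - A*q^n)*(1-B*q^n)/((1 - q*q^n)*(1 - C*q^n))" for n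
  define c where "c = (1 + norm z) / 2"
  have "(\<lambda>n. norm (\<rho> n * z)) \<longlonglongrightarrow> norm ((1 - A*0)*(1-B*0)/((1 - q*0)*(1 - C*0)) * z)"
    unfolding \<rho>_def by (intro tendsto_intros qpow_tendsto0) auto
  hence "(\<lambda>n. norm (\<rho> n * z)) \<longlonglongrightarrow> norm z" by simp
  moreover have "norm z < c" using z by (simp add: c_def z_def)
  ultimately have "eventually (\<lambda>n. norm (\<rho> n * z) < c) sequentially"
    by (rule order_tendstoD)
  then obtain N where N: "\<And>n. n \<ge> N \<Longrightarrow> norm (\<rho> n * z) < c"
    by (auto simp: eventually_sequentially)
  show ?thesis
  proof (rule summable_ratio_test)
    show "c < 1" using z by (simp add: c_def z_def)
    fix n assume "n \<ge> N"
    have "qgt q A B C (Suc n) = qgt q A B C n * (\<rho> n * z)"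
      by (simp add: qgt_Suc \<rho>_def z_def)
    hence "norm (qgt q A B C (Suc n)) = norm (qgt q A B C n) * norm (\<rho> n * z)"
      by (simp add: norm_mult)
    also have "\<dots> \<le> norm (qgt q A B C n) * c"
      using N[OF \<open>n \<ge> N\<close>] by (intro mult_left_mono) auto
    finally show "norm (qgt q A B C (Suc n)) \<le> c * norm (qgt q A B C n)" by (simp add: mult_ac)
  qed
qed

lemma qgt_shift:
  assumes "1 - x \<noteq> 0" "1 - x*q^n \<noteq> 0"
  shows "qgt q A B (x*q) n = qgt q A B x n * (q^n * (1-x)/(1 - x*q^n))"
proof -
  have "qpoch q x (Suc n) = (1-x) * qpoch q (x*q) n" by (rule qpoch_Suc')
  hence e: "qpoch q (x*q) n = qpoch q x n * (1 - x*q^n) / (1-x)"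
    using assms by (simp add: qpoch_Suc field_simps)
  show ?thesis unfolding qgt_def e using assms
    by (simp add: power_mult_distrib field_simps)
qed

lemma qgauss_contig:
  assumes A: "A \<noteq> 0" and B: "B \<noteq> 0" and xn: "\<And>n. qpoch q x n \<noteq> 0"
    and z: "norm (x/(A*B)) < 1"
  shows "(1 - x/(A*B)) * suminf (qgt q A B x) = (1-x/A)*(1-x/B)/(1-x) * suminf (qgt q A B (x*q))"
proof -
  define K where "K = (1-x/A)*(1-x/B)/(1-x)"
  have x1: "1 - x \<noteq> 0" using xn[of 1] by (simp add: qpoch_def)
  have xX: "1 - x * q^n \<noteq> 0" for n using xn[of "Suc n"] by (simp add: qpoch_Suc)
  have z2: "norm ((x*q)/(A*B)) < 1"
  proof -
    have "norm ((x*q)/(A*B)) = norm (x/(A*B)) * norm q" by (simp add: norm_mult norm_divide)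
    also have "\<dots> \<le> norm (x/(A*B))" using q1 by (intro mult_left_le) auto
    finally show ?thesis using z by simp
  qed
  have S1: "summable (qgt q A B x)" by (rule qgt_summable[OF z])
  have S2: "summable (qgt q A B (x*q))" by (rule qgt_summable[OF z2])
  have part: "(1 - x/(A*B)) * (\<Sum>n<N. qgt q A B x n) - K * (\<Sum>n<N. qgt q A B (x*q) n)
      = - qgt q A B x N * (1 - q^N)" for N
  proof (induction N)
    case 0 show ?case by simp
  next
    case (Suc N)
    have q1': "1 - q * q^N \<noteq> 0" using q_pow_neq_1[OF q0 q1, of "Suc N"] by auto
    have "(1 - x/(A*B)) * (\<Sum>n<Suc N. qgt q A B x n) - K * (\<Sum>n<Suc N. qgt q A B (x*q) n)
       = ((1 - x/(A*B)) * (\<Sum>n<N. qgt q A B x n) - K * (\<Sum>n<N. qgt q A B (x*q) n))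
         + (1 - x/(A*B)) * qgt q A B x N - K * qgt q A B (x*q) N"
      by (simp add: algebra_simps)
    also have "\<dots> = - qgt q A B x N * (1 - q^N) + (1 - x/(A*B)) * qgt q A B x N
         - K * (qgt q A B x N * (q^N * (1-x)/(1 - x*q^N)))"
      using Suc.IH qgt_shift[OF x1 xX[of N]] by simp
    also have "\<dots> = - (qgt q A B x N * ((1-A*q^N)*(1-B*q^N)/(1-x*q^N))*(x/(A*B)))"
      unfolding K_def using alg1[OF x1 xX[of N] A B, of "qgt q A B x N"] by (simp add: algebra_simps)
    also have "\<dots> = - (qgt q A B x N * ((1-A*q^N)*(1-B*q^N)/((1-q*q^N)*(1-x*q^N))*(x/(A*B)))) * (1 - q*q^N)"
      using alg2[OF q1', of "qgt q A B x N" "(1-A*q^N)*(1-B*q^N)" "1-x*q^N" "x/(A*B)"] by simp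
    also have "\<dots> = - qgt q A B x (Suc N) * (1 - q^Suc N)"
      by (simp add: qgt_Suc)
    finally show ?case .
  qed
  have L1: "(\<lambda>N. (1 - x/(A*B)) * (\<Sum>n<N. qgt q A B x n) - K * (\<Sum>n<N. qgt q A B (x*q) n))
      \<longlonglongrightarrow> (1 - x/(A*B)) * suminf (qgt q A B x) - K * suminf (qgt q A B (x*q))"
    by (intro tendsto_intros summable_LIMSEQ S1 S2)
  have L2: "(\<lambda>N. - qgt q A B x N * (1 - q^N)) \<longlonglongrightarrow> - 0 * (1 - 0)"
    by (intro tendsto_intros summable_LIMSEQ_zero S1 qpow_tendsto0)
  from L1 L2 part have "(1 - x/(A*B)) * suminf (qgt q A B x) - K * suminf (qgt q A B (x*q)) = 0"
    using LIMSEQ_unique by fastforce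
  thus ?thesis unfolding K_def by simp
qed


lemma qgauss_iter:
  assumes A: "A \<noteq> 0" and B: "B \<noteq> 0" and Cn: "\<And>n. qpoch q C n \<noteq> 0"
    and z: "norm (C/(A*B)) < 1"
  shows "suminf (qgt q A B C) = qpoch q (C/A) N * qpoch q (C/B) N / (qpoch q C N * qpoch q (C/(A*B)) N)
            * suminf (qgt q A B (C*q^N))"
proof (induction N)
  case 0 show ?case by simp
next
  case (Suc N)
  define x where "x = C*q^N"
  have xn: "qpoch q x n \<noteq> 0" for n using Cn[of "N+n"] by (simp add: qpoch_add x_def)
  have zx: "norm (x/(A*B)) < 1"
  proof -
    have "norm (x/(A*B)) = norm (C/(A*B)) * norm (q^N)" by (simp add: x_def norm_mult norm_divide)
    also have "\<dots> \<le> norm (C/(A*B))" using norm_q_pow_le[OF q0 q1, of N] by (intro mult_left_le) auto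
    finally show ?thesis using z by simp
  qed
  have x1: "1 - x \<noteq> 0" using xn[of 1] by (simp add: qpoch_def)
  have zz: "1 - x/(A*B) \<noteq> 0" using zx by auto
  have "(1 - x/(A*B)) * suminf (qgt q A B x) = (1-x/A)*(1-x/B)/(1-x) * suminf (qgt q A B (x*q))"
    by (rule qgauss_contig[OF A B xn zx])
  hence fx: "suminf (qgt q A B x) = (1-x/A)*(1-x/B)/((1-x)*(1 - x/(A*B))) * suminf (qgt q A B (x*q))"
    by (rule alg3[OF zz])
  have xq: "x * q = C * q ^ Suc N" by (simp add: x_def mult_ac)
  have pre: "qpoch q (C/A) (Suc N) * qpoch q (C/B) (Suc N) / (qpoch q C (Suc N) * qpoch q (C/(A*B)) (Suc N))
     = qpoch q (C/A) N * qpoch q (C/B) N / (qpoch q C N * qpoch q (C/(A*B)) N) *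
       ((1-x/A)*(1-x/B)/((1-x)*(1 - x/(A*B))))"
    by (simp add: qpoch_Suc x_def divide_inverse inverse_mult_distrib mult_ac)
  show ?case using Suc.IH unfolding pre fx[unfolded xq] x_def[symmetric] by (simp add: mult_ac)
qed

lemma qgauss_tail_limit:
  assumes A: "A \<noteq> 0" and B: "B \<noteq> 0" and z: "norm (C/(A*B)) < 1"
  shows "(\<lambda>N. suminf (qgt q A B (C*q^N))) \<longlonglongrightarrow> 1"
proof -
  obtain KA where KA: "KA > 0" "\<And>k. norm (qpoch q A k) \<le> KA"
    using convergent_imp_Bseq[OF convergentI[OF qpoch_LIMSEQ[OF q0 q1, of A]]] by (auto elim!: BseqE)
  obtain KB where KB: "KB > 0" "\<And>k. norm (qpoch q B k) \<le> KB"
    using convergent_imp_Bseq[OF convergentI[OF qpoch_LIMSEQ[OF q0 q1, of B]]] by (auto elim!: BseqE)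
  have qinz: "qpoch_inf q q \<noteq> 0" by (rule qpoch_inf_nz_all[OF q0 q1 qpoch_q_nz[OF q0 q1]])
  have LQ: "(\<lambda>k. 1 / qpoch q q k) \<longlonglongrightarrow> 1 / qpoch_inf q q"
    by (intro tendsto_intros qpoch_LIMSEQ[OF q0 q1] qinz)
  obtain KQ where KQ: "KQ > 0" "\<And>k. norm (1 / qpoch q q k) \<le> KQ"
    using convergent_imp_Bseq[OF convergentI[OF LQ]] by (auto elim!: BseqE)
  define r where "r = norm (C/(A*B))"
  have r: "0 \<le> r" "r < 1" using z by (auto simp: r_def)
  have Cq0: "(\<lambda>N. C * q^N) \<longlonglongrightarrow> 0"
    using tendsto_mult[OF tendsto_const qpow_tendsto0, of C] by simp
  have "(\<lambda>N. norm (C * q^N)) \<longlonglongrightarrow> 0" using tendsto_norm[OF Cq0] by simp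
  moreover have "0 < (1 - norm q) / 2" using q1 by simp
  ultimately have "eventually (\<lambda>N. norm (C * q^N) < (1 - norm q) / 2) sequentially"
    by (rule order_tendstoD)
  then obtain N0 where N0: "\<And>N. N \<ge> N0 \<Longrightarrow> norm (C * q^N) < (1 - norm q) / 2"
    by (auto simp: eventually_sequentially)
  have bound: "norm (qgt q A B (C*q^N) k) \<le> KA * KB * KQ * 2 * r ^ k" if "N \<ge> N0" for N k
  proof -
    define x where "x = C*q^N"
    have e: "qgt q A B x k = qpoch q A k * qpoch q B k * (1 / qpoch q q k) * (1 / qpoch q x k) * (x/(A*B))^k"
      by (simp add: qgt_def)
    have lb: "norm (qpoch q x k) \<ge> 1/2"
      using qpoch_lower_bound[OF q0 q1, of x k] N0[OF that] by (simp add: x_def)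
    have b1: "norm (1 / qpoch q x k) \<le> 2"
    proof -
      have "qpoch q x k \<noteq> 0" using lb by auto
      thus ?thesis using lb by (simp add: norm_divide field_simps)
    qed
    have b2: "norm ((x/(A*B))^k) \<le> r ^ k"
    proof -
      have "norm (x/(A*B)) = r * norm (q^N)" by (simp add: x_def r_def norm_mult norm_divide)
      also have "\<dots> \<le> r" using norm_q_pow_le[OF q0 q1, of N] r by (intro mult_left_le) auto
      finally show ?thesis by (simp add: norm_power power_mono)
    qed
    have "norm (qgt q A B x k) = norm (qpoch q A k) * norm (qpoch q B k) * norm (1 / qpoch q q k)
          * norm (1 / qpoch q x k) * norm ((x/(A*B))^k)"
      unfolding e norm_mult by simp
    also have "\<dots> \<le> KA * KB * KQ * 2 * r ^ k"
      using KA KB KQ b1 b2 r by (intro mult_mono) auto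
    finally show ?thesis by (simp add: x_def)
  qed
  define b where "b k = (if k = 0 then (1::complex) else 0)" for k :: nat
  have lim: "(\<lambda>N. qgt q A B (C*q^N) k) \<longlonglongrightarrow> b k" for k
  proof -
    have "(\<lambda>N. qpoch q A k * qpoch q B k / (qpoch q q k * qpoch q (C*q^N) k) * ((C*q^N)/(A*B))^k)
        \<longlonglongrightarrow> qpoch q A k * qpoch q B k / (qpoch q q k * qpoch q 0 k) * (0/(A*B))^k"
      using qpoch_q_nz[OF q0 q1, of k] A B
      by (intro tendsto_intros qpoch_tendsto Cq0) (auto simp: qpoch_def)
    thus ?thesis by (cases k) (auto simp: b_def qgt_def qpoch_def)
  qed
  have T: "eventually (\<lambda>N. summable (\<lambda>k. norm (qgt q A B (C*q^N) k))) sequentially \<and>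
           summable (\<lambda>n. norm (b n)) \<and>
           ((\<lambda>N. suminf (\<lambda>k. qgt q A B (C*q^N) k)) \<longlongrightarrow> suminf b) sequentially"
  proof (rule tannerys_theorem[where M = "\<lambda>k. KA * KB * KQ * 2 * r ^ k"])
    show "\<And>k. (\<lambda>N. qgt q A B (C*q^N) k) \<longlonglongrightarrow> b k" by (rule lim)
    show "eventually (\<lambda>(k,N). norm (qgt q A B (C*q^N) k) \<le> KA * KB * KQ * 2 * r ^ k)
            (at_top \<times>\<^sub>F sequentially)"
      unfolding eventually_prod_sequentially using bound by auto
    show "summable (\<lambda>k. KA * KB * KQ * 2 * r ^ k)"
      using r by (intro summable_mult summable_geometric) auto
  qed simp
  have "b = (\<lambda>r. if r = 0 then 1 else 0)" by (simp add: b_def fun_eq_iff)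
  hence "b sums 1" using sums_single[of 0 "\<lambda>_. (1::complex)"] by simp
  hence "suminf b = 1" by (simp add: sums_iff)
  thus ?thesis using T by simp
qed

theorem qgauss:
  assumes A: "A \<noteq> 0" and B: "B \<noteq> 0" and Cn: "\<And>n. qpoch q C n \<noteq> 0"
    and z: "norm (C/(A*B)) < 1"
  shows "qgt q A B C sums (qpoch_inf q (C/A) * qpoch_inf q (C/B) / (qpoch_inf q C * qpoch_inf q (C/(A*B))))"
proof -
  have d: "qpoch_inf q C * qpoch_inf q (C/(A*B)) \<noteq> 0"
    using qpoch_inf_nz_all[OF q0 q1 Cn] qpoch_inf_nz_small[OF q0 q1 z] by simp
  have "(\<lambda>N. qpoch q (C/A) N * qpoch q (C/B) N / (qpoch q C N * qpoch q (C/(A*B)) N)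
            * suminf (qgt q A B (C*q^N)))
        \<longlonglongrightarrow> qpoch_inf q (C/A) * qpoch_inf q (C/B) / (qpoch_inf q C * qpoch_inf q (C/(A*B))) * 1"
    by (intro tendsto_intros qpoch_LIMSEQ[OF q0 q1] qgauss_tail_limit[OF A B z] d)
  hence "(\<lambda>N. suminf (qgt q A B C))
        \<longlonglongrightarrow> qpoch_inf q (C/A) * qpoch_inf q (C/B) / (qpoch_inf q C * qpoch_inf q (C/(A*B)))"
    using qgauss_iter[OF A B Cn z] by simp
  hence "suminf (qgt q A B C) = qpoch_inf q (C/A) * qpoch_inf q (C/B) / (qpoch_inf q C * qpoch_inf q (C/(A*B)))"
    using LIMSEQ_const_iff by blast
  moreover have "summable (qgt q A B C)" by (rule qgt_summable[OF z])
  ultimately show ?thesis by (simp add: summable_sums_iff)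
qed

end


definition lpoly :: "complex \<Rightarrow> complex \<Rightarrow> nat \<Rightarrow> complex poly" where
  "lpoly q u n = (\<Prod>j<n. [:1, -(u*q^j):])"

lemma poly_lpoly: "poly (lpoly q u n) x = qpoch q (x*u) n"
  by (simp add: lpoly_def poly_prod qpoch_def mult_ac)

lemma lin_prod_deg_coeff:
  fixes f g :: "nat \<Rightarrow> 'a::comm_ring_1"
  shows "degree (\<Prod>j<n. [:f j, g j:]) \<le> n \<and> coeff (\<Prod>j<n. [:f j, g j:]) n = (\<Prod>j<n. g j)"
proof (induction n)
  case 0 show ?case by simp
next
  case (Suc n)
  define P where "P = (\<Prod>j<n. [:f j, g j:])"
  have dP: "degree P \<le> n" and cP: "coeff P n = (\<Prod>j<n. g j)" using Suc.IH by (auto simp: P_def)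
  have e: "(\<Prod>j<Suc n. [:f j, g j:]) = P * [:f n, g n:]" by (simp add: P_def)
  have "degree (P * [:f n, g n:]) \<le> degree P + degree [:f n, g n:]" by (rule degree_mult_le)
  also have "\<dots> \<le> Suc n" using dP by simp
  finally have d: "degree (P * [:f n, g n:]) \<le> Suc n" .
  have "coeff P (Suc n) = 0" using dP by (intro coeff_eq_0) auto
  hence "coeff (P * [:f n, g n:]) (Suc n) = g n * coeff P n" by simp
  thus ?case using d cP e by (simp add: mult_ac)
qed

lemma lin_prod_deg:
  fixes f g :: "nat \<Rightarrow> 'a::comm_ring_1"
  shows "degree (\<Prod>j<n. [:f j, g j:]) \<le> n"
  using lin_prod_deg_coeff by blast
lemma lin_prod_coeff:
  fixes f g :: "nat \<Rightarrow> 'a::comm_ring_1"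
  shows "coeff (\<Prod>j<n. [:f j, g j:]) n = (\<Prod>j<n. g j)"
  using lin_prod_deg_coeff by blast

lemma coeff_mult_le:
  fixes p r :: "'a::comm_ring_1 poly"
  assumes "degree p \<le> k" "degree r \<le> l"
  shows "coeff (p * r) (k + l) = coeff p k * coeff r l"
proof -
  have "coeff (p * r) (k + l) = (\<Sum>i\<le>k+l. coeff p i * coeff r (k+l-i))" by (rule coeff_mult)
  also have "\<dots> = (\<Sum>i\<in>{k}. coeff p i * coeff r (k+l-i))"
  proof (rule sum.mono_neutral_right)
    show "\<forall>i\<in>{..k+l} - {k}. coeff p i * coeff r (k+l-i) = 0"
    proof
      fix i assume i: "i \<in> {..k+l} - {k}"
      show "coeff p i * coeff r (k+l-i) = 0"
      proof (cases "i < k")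
        case True
        hence "coeff r (k+l-i) = 0" using assms(2) i by (intro coeff_eq_0) auto
        thus ?thesis by simp
      next
        case False
        hence "coeff p i = 0" using assms(1) i by (intro coeff_eq_0) auto
        thus ?thesis by simp
      qed
    qed
  qed auto
  finally show ?thesis by simp
qed

lemma degree_lpoly: "degree (lpoly q u n) \<le> n"
  unfolding lpoly_def by (rule lin_prod_deg)
lemma coeff_lpoly: "coeff (lpoly q u n) n = (\<Prod>j<n. -(u*q^j))"
  unfolding lpoly_def by (rule lin_prod_coeff)

lemma newton_exp:
  fixes q :: complex
  assumes q0: "q \<noteq> 0"
  shows "degree (P::complex poly) \<le> n \<Longrightarrow> \<exists>Q. \<forall>w. poly P w = (\<Sum>k\<le>n. Q k * qpoch q w k)"
proof (induction n arbitrary: P)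
  case 0
  hence "poly P w = coeff P 0" for w by (simp add: poly_altdef)
  thus ?case by (intro exI[of _ "\<lambda>_. coeff P 0"]) simp
next
  case (Suc n)
  define r where "r = lpoly q 1 (Suc n)"
  have cr: "coeff r (Suc n) \<noteq> 0" using q0 by (simp add: r_def coeff_lpoly)
  define c where "c = coeff P (Suc n) / coeff r (Suc n)"
  define P' where "P' = P - smult c r"
  have "degree (smult c r) \<le> Suc n" using degree_lpoly[of q 1 "Suc n"] degree_smult_le[of c r]
    by (simp add: r_def)
  hence dP': "degree P' \<le> Suc n" unfolding P'_def using Suc.prems by (intro degree_diff_le)
  have "coeff P' (Suc n) = 0" using cr by (simp add: P'_def c_def)
  hence dPn: "degree P' \<le> n"
  proof (intro degree_le allI impI)
    fix i assume c0: "coeff P' (Suc n) = 0" and "n < i"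
    show "coeff P' i = 0"
    proof (cases "i = Suc n")
      case True thus ?thesis using c0 by simp
    next
      case False thus ?thesis using dP' \<open>n < i\<close> by (intro coeff_eq_0) auto
    qed
  qed
  then obtain Q where Q: "\<And>w. poly P' w = (\<Sum>k\<le>n. Q k * qpoch q w k)" using Suc.IH[OF dPn] by blast
  have PQ: "poly P w = (\<Sum>k\<le>Suc n. (Q(Suc n := c)) k * qpoch q w k)" for w
  proof -
    define Q' where "Q' = Q(Suc n := c)"
    have "poly P w = poly P' w + c * qpoch q w (Suc n)"
      by (simp add: P'_def r_def poly_lpoly)
    also have "poly P' w = (\<Sum>k\<le>n. Q' k * qpoch q w k)"
      unfolding Q by (intro sum.cong) (auto simp: Q'_def)
    also have "c = Q' (Suc n)" by (simp add: Q'_def)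
    also have "(\<Sum>k\<le>n. Q' k * qpoch q w k) + Q' (Suc n) * qpoch q w (Suc n)
        = (\<Sum>k\<le>Suc n. Q' k * qpoch q w k)" by (rule sum.atMost_Suc[symmetric])
    finally show ?thesis by (simp add: Q'_def)
  qed
  show ?case by (rule exI[of _ "Q(Suc n := c)"]) (use PQ in blast)
qed


definition qq :: "complex \<Rightarrow> nat \<Rightarrow> complex" where "qq q k = (\<Prod>t<k. q^t)"

lemma qq_Suc: "qq q (Suc k) = qq q k * q^k" by (simp add: qq_def)

lemma qinv_poch:
  fixes q :: complex
  assumes q0: "q \<noteq> 0"
  shows "qpoch q (inverse (q^(k+w))) k * qpoch q q w = (-1)^k * qq q k / q^(k*(k+w)) * qpoch q q (k+w)"
proof (induction k arbitrary: w)
  case 0 show ?case by (simp add: qq_def)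
next
  case (Suc k)
  define x where "x = inverse (q^(Suc k + w))"
  have xq: "x * q = inverse (q^(k+w))" using q0 by (simp add: x_def field_simps)
  have "qpoch q x (Suc k) * qpoch q q w = (1 - x) * (qpoch q (x*q) k * qpoch q q w)"
    by (simp add: qpoch_Suc' mult_ac)
  also have "\<dots> = (1 - x) * ((-1)^k * qq q k / q^(k*(k+w)) * qpoch q q (k+w))"
    unfolding xq Suc.IH ..
  also have "\<dots> = (-1)^Suc k * qq q (Suc k) / q^(Suc k*(Suc k+w)) * qpoch q q (Suc k+w)"
  proof -
    have e: "Suc k * (Suc k + w) = (Suc k + w) + k*(k+w) + k" by (simp add: algebra_simps)
    have e2: "qpoch q q (Suc k + w) = qpoch q q (k+w) * (1 - q^(Suc k + w))"
      by (simp add: qpoch_Suc)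
    show ?thesis unfolding e e2 x_def power_add qq_Suc using q0
      by (simp add: field_simps)
  qed
  finally show ?case by (simp add: x_def)
qed

lemma qinv_poch_zero: "y < k \<Longrightarrow> q \<noteq> 0 \<Longrightarrow> qpoch q (inverse (q^y)) k = 0"
  by (auto simp: qpoch_eq_0_iff intro!: exI[of _ y])

definition gpoly :: "complex \<Rightarrow> nat \<Rightarrow> (nat \<Rightarrow> complex) \<Rightarrow> (nat \<Rightarrow> nat) \<Rightarrow> complex poly" where
  "gpoly q p c m = smult (1 / (\<Prod>i<p. qpoch q (c i) (m i))) (\<Prod>i<p. \<Prod>t<m i. [:-(c i * q^t), 1:])"

lemma degree_gpoly: "degree (gpoly q p c m) \<le> (\<Sum>i<p. m i)"
proof -
  have "degree (\<Prod>i<p. \<Prod>t<m i. [:-(c i * q^t), 1:]) \<le> (\<Sum>i<p. degree (\<Prod>t<m i. [:-(c i * q^t), 1:]))"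
    using degree_prod_sum_le[of "{..<p}" "\<lambda>i. \<Prod>t<m i. [:-(c i * q^t), 1:]"] by (simp add: o_def)
  also have "\<dots> \<le> (\<Sum>i<p. m i)" by (intro sum_mono lin_prod_deg)
  finally show ?thesis unfolding gpoly_def using degree_smult_le order_trans by blast
qed

lemma poly_gpoly: "poly (gpoly q p c m) w = (\<Prod>i<p. \<Prod>t<m i. (w - c i * q^t)) / (\<Prod>i<p. qpoch q (c i) (m i))"
  by (simp add: gpoly_def poly_prod)

definition Qc :: "complex \<Rightarrow> nat \<Rightarrow> (nat \<Rightarrow> complex) \<Rightarrow> (nat \<Rightarrow> nat) \<Rightarrow> nat \<Rightarrow> complex" where
  "Qc q p c m = (SOME Q. \<forall>w. poly (gpoly q p c m) w = (\<Sum>k\<le>(\<Sum>i<p. m i). Q k * qpoch q w k))"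

lemma Qc: "q \<noteq> 0 \<Longrightarrow> poly (gpoly q p c m) w = (\<Sum>k\<le>(\<Sum>i<p. m i). Qc q p c m k * qpoch q w k)"
proof -
  assume q0: "q \<noteq> 0"
  have "\<exists>Q. \<forall>w. poly (gpoly q p c m) w = (\<Sum>k\<le>(\<Sum>i<p. m i). Q k * qpoch q w k)"
    by (rule newton_exp[OF q0 degree_gpoly])
  from someI_ex[OF this] show ?thesis unfolding Qc_def by blast
qed

definition Fq :: "complex \<Rightarrow> nat \<Rightarrow> (nat \<Rightarrow> complex) \<Rightarrow> (nat \<Rightarrow> nat) \<Rightarrow> complex \<Rightarrow> complex \<Rightarrow> complex \<Rightarrow> complex" where
  "Fq q p c m a b d = (\<Sum>k\<le>(\<Sum>i<p. m i). Qc q p c m k *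
     (qpoch q a k * qpoch q b k * (d/(a*b))^k * ((-1)^k * qq q k / q^(k*k))
      * qpoch q (d * inverse (q^(\<Sum>i<p. m i))/(a*b)) ((\<Sum>i<p. m i) - k)))"

definition Gq :: "complex \<Rightarrow> nat \<Rightarrow> complex \<Rightarrow> complex \<Rightarrow> complex \<Rightarrow> complex" where
  "Gq q M a b d = qpoch_inf q (d/a) * qpoch_inf q (d/b) / (qpoch_inf q d * qpoch_inf q (d * inverse (q^M)/(a*b)))"

definition lterm :: "complex \<Rightarrow> nat \<Rightarrow> (nat \<Rightarrow> complex) \<Rightarrow> (nat \<Rightarrow> nat) \<Rightarrow> complex \<Rightarrow> complex \<Rightarrow> complex \<Rightarrow> nat \<Rightarrow> complex" where
  "lterm q p c m a b d y = qpoch q a y * qpoch q b y / (qpoch q q y * qpoch q d y)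
            * (\<Prod>i<p. qpoch q (c i * q ^ m i) y / qpoch q (c i) y)
            * (d * inverse (q^(\<Sum>i<p. m i)) / (a * b)) ^ y"

definition Uterm :: "complex \<Rightarrow> complex \<Rightarrow> complex \<Rightarrow> complex \<Rightarrow> nat \<Rightarrow> nat \<Rightarrow> complex" where
  "Uterm q a b d k y = qpoch q a y * qpoch q b y / (qpoch q q y * qpoch q d y) * (d/(a*b))^y
      * qpoch q (inverse (q^y)) k"

lemma KM_factor:
  fixes q c :: complex
  assumes q0: "q \<noteq> 0" and "qpoch q c y \<noteq> 0" "qpoch q c m \<noteq> 0"
  shows "qpoch q (c*q^m) y / qpoch q c y = q^(m*y) * (\<Prod>t<m. (inverse (q^y) - c*q^t)) / qpoch q c m"
proof -
  have "qpoch q c m * qpoch q (c*q^m) y = qpoch q c y * qpoch q (c*q^y) m"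
    using qpoch_add[of q c m y] qpoch_add[of q c y m] by (simp add: add.commute)
  hence e1: "qpoch q (c*q^m) y / qpoch q c y = qpoch q (c*q^y) m / qpoch q c m"
    using assms by (simp add: field_simps)
  have "qpoch q (c*q^y) m = (\<Prod>t<m. q^y * (inverse (q^y) - c*q^t))"
    unfolding qpoch_def using q0 by (intro prod.cong) (auto simp: field_simps)
  also have "\<dots> = q^(m*y) * (\<Prod>t<m. (inverse (q^y) - c*q^t))"
    by (simp add: prod.distrib power_mult mult.commute[of m y])
  finally show ?thesis unfolding e1 by simp
qed

lemma lterm_expand:
  fixes q :: complex
  assumes q0: "q \<noteq> 0" and cn: "\<And>i y. i < p \<Longrightarrow> qpoch q (c i) y \<noteq> 0"
  shows "lterm q p c m a b d y = (\<Sum>k\<le>(\<Sum>i<p. m i). Qc q p c m k * Uterm q a b d k y)"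
proof -
  define M where "M = (\<Sum>i<p. m i)"
  define A where "A i = q^(m i*y)" for i
  define B where "B i = (\<Prod>t<m i. (inverse (q^y) - c i*q^t))" for i
  define C where "C i = qpoch q (c i) (m i)" for i
  have "(\<Prod>i<p. qpoch q (c i * q ^ m i) y / qpoch q (c i) y) = (\<Prod>i<p. A i * (B i / C i))"
    using cn by (intro prod.cong) (auto simp: KM_factor[OF q0] A_def B_def C_def)
  also have "\<dots> = (\<Prod>i<p. A i) * ((\<Prod>i<p. B i) / (\<Prod>i<p. C i))"
    unfolding prod.distrib prod_dividef ..
  also have "(\<Prod>i<p. A i) = q^(M*y)"
    unfolding A_def M_def sum_distrib_right power_sum ..
  also have "(\<Prod>i<p. B i) / (\<Prod>i<p. C i) = (\<Sum>k\<le>M. Qc q p c m k * qpoch q (inverse (q^y)) k)"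
    using Qc[OF q0, of p c m "inverse (q^y)"] unfolding poly_gpoly M_def B_def C_def .
  finally have P: "(\<Prod>i<p. qpoch q (c i * q ^ m i) y / qpoch q (c i) y)
     = q^(M*y) * (\<Sum>k\<le>M. Qc q p c m k * qpoch q (inverse (q^y)) k)" .
  have z: "(d * inverse (q^M) / (a * b)) ^ y * q^(M*y) = (d/(a*b))^y"
  proof -
    have "(d * inverse (q^M) / (a * b)) ^ y * q^(M*y) = (d * inverse (q^M) / (a * b) * q^M) ^ y"
      by (simp only: power_mult power_mult_distrib)
    also have "d * inverse (q^M) / (a * b) * q^M = d/(a*b)" using q0 by simp
    finally show ?thesis .
  qed
  define X where "X = qpoch q a y * qpoch q b y / (qpoch q q y * qpoch q d y)"
  have "lterm q p c m a b d y = X * ((d * inverse (q^M) / (a * b)) ^ y * q^(M*y))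
      * (\<Sum>k\<le>M. Qc q p c m k * qpoch q (inverse (q^y)) k)"
    unfolding lterm_def P M_def[symmetric] X_def by (simp only: mult_ac)
  also have "\<dots> = (\<Sum>k\<le>M. X * (d/(a*b))^y * (Qc q p c m k * qpoch q (inverse (q^y)) k))"
    unfolding z sum_distrib_left ..
  also have "\<dots> = (\<Sum>k\<le>M. Qc q p c m k * Uterm q a b d k y)"
    unfolding Uterm_def X_def by (intro sum.cong refl) (simp only: mult_ac)
  finally show ?thesis by (simp add: M_def)
qed


lemma alg4:
  fixes A1 A2 B1 B2 Qkw D1 D2 Zkw s qk Pkkw Pkk Qw Zk Zw :: complex
  assumes "Qkw \<noteq> 0" "Pkk \<noteq> 0" "Pkkw \<noteq> 0" "D1 \<noteq> 0" "D2 \<noteq> 0" "Qw \<noteq> 0"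
    and "Zkw = Zk * Zw * Pkkw / Pkk"
  shows "(A1*A2)*(B1*B2)/(Qkw*(D1*D2)) * Zkw * (s*qk/Pkkw*Qkw/Qw)
       = (A1*B1*Zk*(s*qk/Pkk)/D1) * (A2*B2/(Qw*D2)*Zw)"
  using assms by (simp add: field_simps)

lemma U_shift:
  fixes q :: complex
  assumes q0: "q \<noteq> 0" and q1: "norm q < 1" and a: "a \<noteq> 0" and b: "b \<noteq> 0"
    and dn: "qpoch q d (k+w) \<noteq> 0"
  shows "Uterm q a b d k (w + k) =
     (qpoch q a k * qpoch q b k * (d/(a*b))^k * ((-1)^k * qq q k / q^(k*k)) / qpoch q d k)
     * qgt q (a*q^k) (b*q^k) (d*q^k) w"
proof -
  have pa: "qpoch q a (k+w) = qpoch q a k * qpoch q (a*q^k) w" by (rule qpoch_add)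
  have pb: "qpoch q b (k+w) = qpoch q b k * qpoch q (b*q^k) w" by (rule qpoch_add)
  have pd: "qpoch q d (k+w) = qpoch q d k * qpoch q (d*q^k) w" by (rule qpoch_add)
  have Qw: "qpoch q q w \<noteq> 0" by (rule qpoch_q_nz[OF q0 q1])
  have Qkw: "qpoch q q (k+w) \<noteq> 0" by (rule qpoch_q_nz[OF q0 q1])
  have D1: "qpoch q d k \<noteq> 0" and D2: "qpoch q (d*q^k) w \<noteq> 0" using dn pd by auto
  have pinv: "qpoch q (inverse (q^(k+w))) k = (-1)^k * qq q k / q^(k*(k+w)) * qpoch q q (k+w) / qpoch q q w"
    using qinv_poch[OF q0, of k w] Qw q0 by (simp add: field_simps)
  have zz: "(d/(a*b))^(k+w) = (d/(a*b))^k * ((d*q^k)/((a*q^k)*(b*q^k)))^w * q^(k*(k+w)) / q^(k*k)"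
  proof -
    have e1: "(d*q^k)/((a*q^k)*(b*q^k)) = (d/(a*b)) / q^k" using q0 by (simp add: field_simps)
    have e2: "q^(k*(k+w)) = q^(k*k) * (q^k)^w" by (simp add: algebra_simps power_add power_mult)
    show ?thesis unfolding e1 e2 using q0 by (simp add: field_simps power_add power_divide)
  qed
  have "Uterm q a b d k (w + k) = (qpoch q a k * qpoch q (a*q^k) w) * (qpoch q b k * qpoch q (b*q^k) w)
      / (qpoch q q (k+w) * (qpoch q d k * qpoch q (d*q^k) w)) * (d/(a*b))^(k+w)
      * ((-1)^k * qq q k / q^(k*(k+w)) * qpoch q q (k+w) / qpoch q q w)"
    unfolding Uterm_def pa[symmetric] pb[symmetric] pd[symmetric] pinv[symmetric] by (simp add: add.commute)
  also have "\<dots> = (qpoch q a k * qpoch q b k * (d/(a*b))^k * ((-1)^k * qq q k / q^(k*k)) / qpoch q d k)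
     * (qpoch q (a*q^k) w * qpoch q (b*q^k) w / (qpoch q q w * qpoch q (d*q^k) w) * ((d*q^k)/((a*q^k)*(b*q^k)))^w)"
    by (rule alg4[OF Qkw _ _ D1 D2 Qw zz]) (use q0 in auto)
  also have "\<dots> = (qpoch q a k * qpoch q b k * (d/(a*b))^k * ((-1)^k * qq q k / q^(k*k)) / qpoch q d k)
     * qgt q (a*q^k) (b*q^k) (d*q^k) w" by (simp add: qgt_def)
  finally show ?thesis .
qed


lemma U_sums:
  fixes q :: complex
  assumes q0: "q \<noteq> 0" and q1: "norm q < 1" and a: "a \<noteq> 0" and b: "b \<noteq> 0"
    and dn: "\<And>n. qpoch q d n \<noteq> 0" and conv: "norm (d * inverse (q^k) / (a*b)) < 1"
  shows "Uterm q a b d k sums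
     ((qpoch q a k * qpoch q b k * (d/(a*b))^k * ((-1)^k * qq q k / q^(k*k)) / qpoch q d k)
      * (qpoch_inf q (d/a) * qpoch_inf q (d/b) / (qpoch_inf q (d*q^k) * qpoch_inf q (d * inverse (q^k)/(a*b)))))"
proof -
  define Kc where "Kc = qpoch q a k * qpoch q b k * (d/(a*b))^k * ((-1)^k * qq q k / q^(k*k)) / qpoch q d k"
  have e1: "(d*q^k)/(a*q^k) = d/a" "(d*q^k)/(b*q^k) = d/b"
    "(d*q^k)/((a*q^k)*(b*q^k)) = d * inverse (q^k)/(a*b)" using q0 by (auto simp: field_simps)
  have dkn: "qpoch q (d*q^k) n \<noteq> 0" for n using dn[of "k+n"] by (simp add: qpoch_add)
  have "qgt q (a*q^k) (b*q^k) (d*q^k) sums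
     (qpoch_inf q ((d*q^k)/(a*q^k)) * qpoch_inf q ((d*q^k)/(b*q^k))
       / (qpoch_inf q (d*q^k) * qpoch_inf q ((d*q^k)/((a*q^k)*(b*q^k)))))"
    by (rule qgauss[OF q0 q1]) (use q0 a b dkn conv e1 in auto)
  hence "(\<lambda>w. Kc * qgt q (a*q^k) (b*q^k) (d*q^k) w) sums
     (Kc * (qpoch_inf q (d/a) * qpoch_inf q (d/b) / (qpoch_inf q (d*q^k) * qpoch_inf q (d * inverse (q^k)/(a*b)))))"
    unfolding e1 by (rule sums_mult)
  hence "(\<lambda>w. Uterm q a b d k (w + k)) sums
     (Kc * (qpoch_inf q (d/a) * qpoch_inf q (d/b) / (qpoch_inf q (d*q^k) * qpoch_inf q (d * inverse (q^k)/(a*b)))))"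
    using U_shift[OF q0 q1 a b dn] unfolding Kc_def by simp
  hence "Uterm q a b d k sums
     (Kc * (qpoch_inf q (d/a) * qpoch_inf q (d/b) / (qpoch_inf q (d*q^k) * qpoch_inf q (d * inverse (q^k)/(a*b))))
      + (\<Sum>i<k. Uterm q a b d k i))"
    by (simp add: sums_iff_shift)
  moreover have "(\<Sum>i<k. Uterm q a b d k i) = 0"
    using q0 by (intro sum.neutral) (auto simp: Uterm_def qinv_poch_zero)
  ultimately show ?thesis by (simp add: Kc_def)
qed

lemma alg5:
  fixes T Dk A B I1 I2 qid J P :: complex
  assumes "qid = Dk * I1" "J = P * I2" "J \<noteq> 0"
  shows "T / Dk * (A * B / (I1 * I2)) = A * B / (qid * J) * (T * P)"
proof -
  have "P \<noteq> 0" "I2 \<noteq> 0" using assms by auto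
  thus ?thesis unfolding assms(1,2) by (simp add: field_simps)
qed

lemma W_eq:
  fixes q :: complex
  assumes q0: "q \<noteq> 0" and q1: "norm q < 1" and kM: "k \<le> M"
    and conv: "norm (d * inverse (q^M) / (a*b)) < 1"
  shows "(qpoch q a k * qpoch q b k * (d/(a*b))^k * ((-1)^k * qq q k / q^(k*k)) / qpoch q d k)
      * (qpoch_inf q (d/a) * qpoch_inf q (d/b) / (qpoch_inf q (d*q^k) * qpoch_inf q (d * inverse (q^k)/(a*b))))
    = Gq q M a b d * ((qpoch q a k * qpoch q b k * (d/(a*b))^k * ((-1)^k * qq q k / q^(k*k)))
      * qpoch q (d * inverse (q^M)/(a*b)) (M-k))"
proof -
  have s1: "qpoch_inf q d = qpoch q d k * qpoch_inf q (d*q^k)" by (rule qpoch_inf_split[OF q0 q1])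
  have e: "d * inverse (q^M)/(a*b) * q^(M-k) = d * inverse (q^k)/(a*b)"
  proof -
    have "q^M = q^k * q^(M-k)" using kM by (simp add: power_add[symmetric])
    thus ?thesis using q0 by (simp add: field_simps)
  qed
  have s2: "qpoch_inf q (d * inverse (q^M)/(a*b)) = qpoch q (d * inverse (q^M)/(a*b)) (M-k)
      * qpoch_inf q (d * inverse (q^k)/(a*b))"
    using qpoch_inf_split[OF q0 q1, of "d * inverse (q^M)/(a*b)" "M-k"] unfolding e .
  have J: "qpoch_inf q (d * inverse (q^M)/(a*b)) \<noteq> 0" by (rule qpoch_inf_nz_small[OF q0 q1 conv])
  show ?thesis unfolding Gq_def by (rule alg5[OF s1 s2 J])
qed

theorem AN:
  fixes q :: complex
  assumes q0: "q \<noteq> 0" and q1: "norm q < 1" and a: "a \<noteq> 0" and b: "b \<noteq> 0"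
    and dn: "\<And>n. qpoch q d n \<noteq> 0" and cn: "\<And>i y. i < p \<Longrightarrow> qpoch q (c i) y \<noteq> 0"
    and conv: "norm (d * inverse (q^(\<Sum>i<p. m i)) / (a*b)) < 1"
  shows "lterm q p c m a b d sums (Gq q (\<Sum>i<p. m i) a b d * Fq q p c m a b d)"
proof -
  define M where "M = (\<Sum>i<p. m i)"
  have convk: "norm (d * inverse (q^k) / (a*b)) < 1" if "k \<le> M" for k
  proof -
    have "norm (inverse (q^k)) \<le> norm (inverse (q^M))"
    proof -
      have "norm q ^ M \<le> norm q ^ k" using q1 that by (intro power_decreasing) auto
      moreover have "0 < norm q ^ M" using q0 by simp
      ultimately have "inverse (norm q ^ k) \<le> inverse (norm q ^ M)" by (rule le_imp_inverse_le)
      thus ?thesis by (simp add: norm_inverse norm_power)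
    qed
    hence "norm (d * inverse (q^k) / (a*b)) \<le> norm (d * inverse (q^M) / (a*b))"
      by (simp add: norm_mult norm_divide divide_right_mono mult_left_mono)
    thus ?thesis using conv M_def by simp
  qed
  have "(\<lambda>y. \<Sum>k\<le>M. Qc q p c m k * Uterm q a b d k y) sums
     (\<Sum>k\<le>M. Qc q p c m k * (Gq q M a b d * ((qpoch q a k * qpoch q b k * (d/(a*b))^k * ((-1)^k * qq q k / q^(k*k)))
      * qpoch q (d * inverse (q^M)/(a*b)) (M-k))))"
  proof (rule sums_sum, rule sums_mult)
    fix k assume "k \<in> {..M}"
    hence kM: "k \<le> M" by simp
    show "Uterm q a b d k sums (Gq q M a b d * ((qpoch q a k * qpoch q b k * (d/(a*b))^k * ((-1)^k * qq q k / q^(k*k)))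
      * qpoch q (d * inverse (q^M)/(a*b)) (M-k)))"
      using U_sums[OF q0 q1 a b dn convk[OF kM]] W_eq[OF q0 q1 kM conv[folded M_def]] by simp
  qed
  moreover have "(\<Sum>k\<le>M. Qc q p c m k * (Gq q M a b d * ((qpoch q a k * qpoch q b k * (d/(a*b))^k * ((-1)^k * qq q k / q^(k*k)))
      * qpoch q (d * inverse (q^M)/(a*b)) (M-k)))) = Gq q M a b d * Fq q p c m a b d"
    unfolding Fq_def M_def[symmetric] sum_distrib_left by (intro sum.cong refl) (simp only: mult_ac)
  moreover have "lterm q p c m a b d = (\<lambda>y. \<Sum>k\<le>M. Qc q p c m k * Uterm q a b d k y)"
    using lterm_expand[OF q0 cn] by (auto simp: M_def)
  ultimately show ?thesis by (simp add: M_def)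
qed


lemma sum_lt_twice: "(\<Sum>t<n. t) * 2 + n = n * (n::nat)"
  by (induction n) (simp_all add: algebra_simps)

lemma qq_pow: "qq q n = q ^ (\<Sum>t<n. t)"
  by (simp add: qq_def power_sum)

lemma qq_exp:
  assumes "k \<le> M"
  shows "qq q k * qq q (M-k) * qq q (Suc M) = q^(k*k) * q^(M*(M-k))"
proof -
  obtain j where j: "M = k + j" using assms le_Suc_ex by blast
  have "(\<Sum>t<k. t) + (\<Sum>t<j. t) + (\<Sum>t<Suc (k+j). t) = k*k + (k+j)*j"
  proof -
    have h1: "(\<Sum>t<k. t) * 2 + k = k * k" by (rule sum_lt_twice)
    have h2: "(\<Sum>t<j. t) * 2 + j = j * j" by (rule sum_lt_twice)
    have h3: "(\<Sum>t<Suc (k+j). t) * 2 + Suc (k+j) = Suc (k+j) * Suc (k+j)" by (rule sum_lt_twice)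
    have "((\<Sum>t<k. t) + (\<Sum>t<j. t) + (\<Sum>t<Suc (k+j). t)) * 2 = (k*k + (k+j)*j) * 2"
      using h1 h2 h3 by (simp add: algebra_simps)
    thus ?thesis by simp
  qed
  thus ?thesis unfolding qq_pow j by (simp add: power_add[symmetric])
qed

definition mpoly :: "complex \<Rightarrow> nat \<Rightarrow> complex poly" where
  "mpoly q k = (\<Prod>j<k. [:-(q^j), 1:])"

lemma poly_mpoly: "a \<noteq> 0 \<Longrightarrow> poly (mpoly q k) (1/a) = qpoch q a k / a^k"
proof -
  assume a: "a \<noteq> 0"
  have "poly (mpoly q k) (1/a) = (\<Prod>j<k. (1 - a*q^j) / a)"
    unfolding mpoly_def poly_prod using a by (intro prod.cong) (auto simp: field_simps)
  also have "\<dots> = qpoch q a k / a^k" by (simp add: prod_dividef qpoch_def)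
  finally show ?thesis .
qed

lemma degree_mpoly: "degree (mpoly q k) \<le> k" unfolding mpoly_def by (rule lin_prod_deg)
lemma coeff_mpoly: "coeff (mpoly q k) k = 1" unfolding mpoly_def by (simp add: lin_prod_coeff)

definition cF :: "complex \<Rightarrow> nat \<Rightarrow> (nat \<Rightarrow> complex) \<Rightarrow> (nat \<Rightarrow> nat) \<Rightarrow> complex \<Rightarrow> complex \<Rightarrow> nat \<Rightarrow> complex" where
  "cF q p c m b d k = Qc q p c m k * qpoch q b k * (d/b)^k * ((-1)^k * qq q k / q^(k*k))"

definition polyF :: "complex \<Rightarrow> nat \<Rightarrow> (nat \<Rightarrow> complex) \<Rightarrow> (nat \<Rightarrow> nat) \<Rightarrow> complex \<Rightarrow> complex \<Rightarrow> complex poly" where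
  "polyF q p c m b d = (\<Sum>k\<le>(\<Sum>i<p. m i). smult (cF q p c m b d k)
      (mpoly q k * lpoly q (d * inverse (q^(\<Sum>i<p. m i))/b) ((\<Sum>i<p. m i)-k)))"

lemma poly_polyF:
  assumes a: "a \<noteq> 0" and b: "b \<noteq> 0"
  shows "poly (polyF q p c m b d) (1/a) = Fq q p c m a b d"
  unfolding polyF_def Fq_def poly_sum
proof (intro sum.cong refl)
  fix k
  define M where "M = (\<Sum>i<p. m i)"
  have e: "1 / a * (d * inverse (q ^ M) / b) = d * inverse (q^M)/(a*b)" by (simp add: field_simps)
  show "poly (smult (cF q p c m b d k) (mpoly q k * lpoly q (d * inverse (q ^ M) / b) (M - k))) (1 / a) =
        Qc q p c m k * (qpoch q a k * qpoch q b k * (d / (a * b)) ^ k * ((- 1) ^ k * qq q k / q ^ (k * k))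
          * qpoch q (d * inverse (q ^ M) / (a * b)) (M - k))"
    unfolding poly_smult poly_mult poly_mpoly[OF a] poly_lpoly e cF_def using a b
    by (simp add: power_divide field_simps)
qed

lemma degree_polyF: "degree (polyF q p c m b d) \<le> (\<Sum>i<p. m i)"
  unfolding polyF_def
proof (intro degree_sum_le)
  fix k assume "k \<in> {..(\<Sum>i<p. m i)}"
  hence k: "k \<le> (\<Sum>i<p. m i)" by simp
  define M where "M = (\<Sum>i<p. m i)"
  have "degree (mpoly q k * lpoly q (d * inverse (q ^ M) / b) (M - k)) \<le> k + (M - k)"
    using degree_mult_le[of "mpoly q k" "lpoly q (d * inverse (q ^ M) / b) (M - k)"]
      degree_mpoly[of q k] degree_lpoly[of q "d * inverse (q ^ M) / b" "M-k"] by linarith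
  thus "degree (smult (cF q p c m b d k) (mpoly q k * lpoly q (d * inverse (q ^ (\<Sum>i<p. m i)) / b) ((\<Sum>i<p. m i) - k)))
        \<le> (\<Sum>i<p. m i)"
    using k degree_smult_le order_trans unfolding M_def by fastforce
qed auto

lemma coeff_polyF:
  "coeff (polyF q p c m b d) (\<Sum>i<p. m i) = (\<Sum>k\<le>(\<Sum>i<p. m i). cF q p c m b d k *
      (\<Prod>j<(\<Sum>i<p. m i)-k. -(d * inverse (q^(\<Sum>i<p. m i))/b * q^j)))"
  unfolding polyF_def coeff_sum
proof (intro sum.cong refl)
  fix k assume "k \<in> {..(\<Sum>i<p. m i)}"
  hence k: "k \<le> (\<Sum>i<p. m i)" by simp
  define M where "M = (\<Sum>i<p. m i)"
  have "coeff (mpoly q k * lpoly q (d * inverse (q ^ M) / b) (M - k)) (k + (M - k))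
      = coeff (mpoly q k) k * coeff (lpoly q (d * inverse (q ^ M) / b) (M - k)) (M-k)"
    by (rule coeff_mult_le[OF degree_mpoly degree_lpoly])
  hence "coeff (mpoly q k * lpoly q (d * inverse (q ^ M) / b) (M - k)) M
      = (\<Prod>j<M-k. -(d * inverse (q^M)/b * q^j))"
    using k by (simp add: M_def coeff_mpoly coeff_lpoly)
  thus "coeff (smult (cF q p c m b d k) (mpoly q k * lpoly q (d * inverse (q ^ (\<Sum>i<p. m i)) / b) ((\<Sum>i<p. m i) - k)))
          (\<Sum>i<p. m i) =
        cF q p c m b d k * (\<Prod>j<(\<Sum>i<p. m i) - k. - (d * inverse (q ^ (\<Sum>i<p. m i)) / b * q ^ j))"
    by (simp add: M_def)
qed

lemma top_F:
  fixes q :: complex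
  assumes q0: "q \<noteq> 0" and b: "b \<noteq> 0"
  shows "coeff (polyF q p c m b d) (\<Sum>i<p. m i) =
     (-1)^(\<Sum>i<p. m i) * d^(\<Sum>i<p. m i) / qq q (Suc (\<Sum>i<p. m i))
       * (\<Prod>i<p. qpoch q (c i / b) (m i)) / (\<Prod>i<p. qpoch q (c i) (m i))"
proof -
  define M where "M = (\<Sum>i<p. m i)"
  define K where "K = (-1)^M * (d/b)^M / qq q (Suc M)"
  have qqnz: "qq q n \<noteq> 0" for n using q0 by (simp add: qq_def)
  have tm: "cF q p c m b d k * (\<Prod>j<M-k. -(d * inverse (q^M)/b * q^j)) = K * (Qc q p c m k * qpoch q b k)"
    if k: "k \<le> M" for k
  proof -
    have pr0: "(\<Prod>j<n. -(D * q^j)) = (-D)^n * qq q n" for D :: complex and n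
    proof -
      have "(\<Prod>j<n. -(D * q^j)) = (\<Prod>j<n. (-D) * q^j)" by simp
      also have "\<dots> = (-D)^n * qq q n" by (simp only: prod.distrib prod_constant card_lessThan qq_def)
      finally show ?thesis .
    qed
    have pr: "(\<Prod>j<M-k. -(d * inverse (q^M)/b * q^j)) = (-(d * inverse (q^M)/b))^(M-k) * qq q (M-k)"
      by (rule pr0)
    have ex: "qq q k * qq q (M-k) * qq q (Suc M) = q^(k*k) * q^(M*(M-k))" by (rule qq_exp[OF k])
    have mk: "(d/b)^k * (d/b)^(M-k) = (d/b)^M" using k by (simp add: power_add[symmetric])
    have mk1: "(-1::complex)^k * (-1)^(M-k) = (-1)^M" using k by (simp add: power_add[symmetric])
    have ip: "(-(d * inverse (q^M)/b))^(M-k) = (-1)^(M-k) * (d/b)^(M-k) * inverse (q^(M*(M-k)))"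
    proof -
      have "(-(d * inverse (q^M)/b))^(M-k) = (-1)^(M-k) * (d^(M-k) * inverse (q^M)^(M-k) / b^(M-k))"
        by (simp only: power_minus[of "d * inverse (q^M)/b"] power_mult_distrib power_divide)
      also have "inverse (q^M)^(M-k) = inverse (q^(M*(M-k)))" by (simp add: power_mult power_inverse)
      finally show ?thesis unfolding power_divide by (simp add: divide_inverse mult_ac)
    qed
    have "cF q p c m b d k * (\<Prod>j<M-k. -(d * inverse (q^M)/b * q^j))
       = Qc q p c m k * qpoch q b k * ((d/b)^k * (d/b)^(M-k)) * ((-1)^k * (-1)^(M-k))
         * (qq q k * qq q (M-k) / (q^(k*k) * q^(M*(M-k))))"
      unfolding cF_def pr ip by (simp add: divide_inverse inverse_mult_distrib mult_ac)
    also have "qq q k * qq q (M-k) / (q^(k*k) * q^(M*(M-k))) = 1 / qq q (Suc M)"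
      using ex qqnz[of "Suc M"] q0 by (simp add: field_simps)
    finally show ?thesis unfolding mk mk1 K_def by (simp add: mult_ac)
  qed
  have "coeff (polyF q p c m b d) M = (\<Sum>k\<le>M. cF q p c m b d k * (\<Prod>j<M-k. -(d * inverse (q^M)/b * q^j)))"
    unfolding M_def by (rule coeff_polyF)
  also have "\<dots> = (\<Sum>k\<le>M. K * (Qc q p c m k * qpoch q b k))"
    by (intro sum.cong refl tm) auto
  also have "\<dots> = K * poly (gpoly q p c m) b"
    unfolding Qc[OF q0] sum_distrib_left M_def ..
  also have "poly (gpoly q p c m) b = (\<Prod>i<p. b^(m i) * qpoch q (c i / b) (m i)) / (\<Prod>i<p. qpoch q (c i) (m i))"
    unfolding poly_gpoly
  proof (intro arg_cong2[where f="(/)"] prod.cong refl)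
    fix i
    have "(\<Prod>t<m i. b - c i * q ^ t) = (\<Prod>t<m i. b * (1 - c i / b * q^t))"
      using b by (intro prod.cong) (auto simp: field_simps)
    thus "(\<Prod>t<m i. b - c i * q ^ t) = b ^ m i * qpoch q (c i / b) (m i)"
      by (simp add: prod.distrib qpoch_def)
  qed
  also have "(\<Prod>i<p. b^(m i) * qpoch q (c i / b) (m i)) = b^M * (\<Prod>i<p. qpoch q (c i / b) (m i))"
    by (simp add: prod.distrib power_sum M_def)
  finally show ?thesis unfolding K_def M_def[symmetric] using b by (simp add: power_divide field_simps)
qed


lemma qpoch_1: "qpoch q x 1 = 1 - x" by (simp add: qpoch_def)

lemma qrefl:
  fixes q D :: complex
  assumes q0: "q \<noteq> 0" and D0: "D \<noteq> 0"
  shows "qpoch q (inverse (q^m) * D) m * qq q (Suc m) = (-D)^m * qpoch q (q/D) m"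
proof (induction m)
  case 0 show ?case by (simp add: qq_def)
next
  case (Suc m)
  have e: "inverse (q^Suc m) * D * q = inverse (q^m) * D" using q0 by (simp add: field_simps)
  have "qpoch q (inverse (q^Suc m) * D) (Suc m) * qq q (Suc (Suc m))
      = (1 - inverse (q^Suc m) * D) * q^Suc m * (qpoch q (inverse (q^m) * D) m * qq q (Suc m))"
    unfolding qpoch_Suc'[of q "inverse (q^Suc m) * D"] e qq_Suc[of q "Suc m"] by (simp only: mult_ac)
  also have "\<dots> = (1 - inverse (q^Suc m) * D) * q^Suc m * ((-D)^m * qpoch q (q/D) m)"
    unfolding Suc.IH ..
  also have "\<dots> = (-D)^Suc m * qpoch q (q/D) (Suc m)"
    unfolding qpoch_Suc using q0 D0 by (simp add: field_simps)
  finally show ?case .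
qed

lemma alg6:
  fixes QB e1 e2 N1 D1 X1 S' Y K :: complex
  assumes "Y * e2 * D1 \<noteq> 0" "S' \<noteq> 0" "N1 * e1 * X1 = Y * e2 * D1"
  shows "(-QB*e1)/(-e2) * (N1/D1) * ((S'*K*X1)/(S'*Y)) = QB * K"
proof -
  have "Y \<noteq> 0" "e2 \<noteq> 0" "D1 \<noteq> 0" using assms(1) by auto
  hence "(-QB*e1)/(-e2) * (N1/D1) * ((S'*K*X1)/(S'*Y)) = QB * K * ((N1 * e1 * X1) / (Y * e2 * D1))"
    using assms(2) by (simp add: field_simps)
  also have "\<dots> = QB * K" using assms(1,3) by simp
  finally show ?thesis .
qed

lemma pair_id:
  fixes q r :: complex
  assumes q0: "q \<noteq> 0" and r0: "r \<noteq> 0" and r1: "r \<noteq> 1"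
    and h1: "qpoch q (q*r) A \<noteq> 0" and h2: "qpoch q (q/r) B \<noteq> 0"
  shows "(r*q^A - q^B)/(r-1) * (qpoch q (inverse (q^B) * r) A / qpoch q (q*r) A)
           * (qpoch q (inverse (q^A) / r) B / qpoch q (q/r) B) = 1/q^(A*B)"
proof -
  define \<rho> where "\<rho> = inverse (q^B) * r"
  define S' where "S' = (\<Prod>t<B. -(q^(t+1)/r))"
  define K where "K = (1/q^(A+1))^B"
  have S'0: "S' \<noteq> 0" using q0 r0 by (simp add: S'_def)
  have N2: "qpoch q (inverse (q^A) / r) B = S' * K * qpoch q (\<rho> * q^(A+1)) B"
  proof -
    have "qpoch q (inverse (q^A) / r) B = (\<Prod>t<B. (-(q^(t+1)/r) * (1/q^(A+1))) * (1 - \<rho> * q^(A+1+(B - Suc t))))"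
      unfolding qpoch_def
    proof (intro prod.cong refl)
      fix t assume "t \<in> {..<B}"
      hence tB: "t < B" by simp
      have ex: "A+1+(B - Suc t) + t = A + B" using tB by simp
      have "q^(A+1+(B - Suc t)) * q^t = q^A * q^B"
        by (simp only: power_add[symmetric] ex)
      thus "1 - inverse (q ^ A) / r * q ^ t = (-(q^(t+1)/r) * (1/q^(A+1))) * (1 - \<rho> * q^(A+1+(B - Suc t)))"
        using q0 r0 unfolding \<rho>_def by (simp add: field_simps power_add)
    qed
    also have "\<dots> = S' * K * (\<Prod>t<B. 1 - \<rho> * q^(A+1+(B - Suc t)))"
      unfolding prod.distrib S'_def K_def by simp
    also have "(\<Prod>t<B. 1 - \<rho> * q^(A+1+(B - Suc t))) = qpoch q (\<rho> * q^(A+1)) B"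
      unfolding qpoch_def using prod.nat_diff_reindex[of "\<lambda>t. 1 - \<rho> * q^(A+1+t)" B]
      by (simp add: power_add mult_ac)
    finally show ?thesis .
  qed
  have D2: "qpoch q (q/r) B = S' * qpoch q \<rho> B"
  proof -
    have "qpoch q (q/r) B = (\<Prod>t<B. (-(q^(t+1)/r)) * (1 - \<rho> * q^(B - Suc t)))"
      unfolding qpoch_def
    proof (intro prod.cong refl)
      fix t assume "t \<in> {..<B}"
      hence tB: "t < B" by simp
      have ex: "B - Suc t + (t+1) = B" using tB by simp
      have "q^(B - Suc t) * q^(t+1) = q^B"
        by (simp only: power_add[symmetric] ex)
      thus "1 - q / r * q ^ t = (-(q^(t+1)/r)) * (1 - \<rho> * q^(B - Suc t))"
        using q0 r0 unfolding \<rho>_def by (simp add: field_simps power_add)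
    qed
    also have "\<dots> = S' * (\<Prod>t<B. 1 - \<rho> * q^(B - Suc t))"
      unfolding prod.distrib S'_def by simp
    also have "(\<Prod>t<B. 1 - \<rho> * q^(B - Suc t)) = qpoch q \<rho> B"
      unfolding qpoch_def using prod.nat_diff_reindex[of "\<lambda>t. 1 - \<rho> * q^t" B] by simp
    finally show ?thesis .
  qed
  have D1: "qpoch q (q*r) A = qpoch q (\<rho> * q^(B+1)) A"
  proof -
    have e: "\<rho> * q^(B+1) = q*r" using q0 by (simp add: \<rho>_def field_simps)
    show ?thesis by (simp only: e)
  qed
  have e1: "r*q^A - q^B = -(q^B) * (1 - \<rho> * q^A)" using q0 by (simp add: \<rho>_def field_simps)
  have e2: "r - 1 = -(1 - \<rho> * q^B)" using q0 by (simp add: \<rho>_def field_simps)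
  have P1: "qpoch q \<rho> (Suc A + B) = qpoch q \<rho> A * (1 - \<rho> * q^A) * qpoch q (\<rho> * q^(A+1)) B"
    by (simp only: qpoch_add qpoch_1 Suc_eq_plus1 mult.assoc)
  have P2: "qpoch q \<rho> (Suc B + A) = qpoch q \<rho> B * (1 - \<rho> * q^B) * qpoch q (\<rho> * q^(B+1)) A"
    by (simp only: qpoch_add qpoch_1 Suc_eq_plus1 mult.assoc)
  have P: "qpoch q \<rho> A * (1 - \<rho> * q^A) * qpoch q (\<rho> * q^(A+1)) B
         = qpoch q \<rho> B * (1 - \<rho> * q^B) * qpoch q (\<rho> * q^(B+1)) A"
    unfolding P1[symmetric] P2[symmetric] by (simp add: add.commute)
  have nz: "qpoch q \<rho> B * (1 - \<rho> * q^B) * qpoch q (\<rho> * q^(B+1)) A \<noteq> 0"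
  proof -
    have "qpoch q \<rho> B \<noteq> 0" using h2 D2 by auto
    moreover have "1 - \<rho> * q^B \<noteq> 0" using r1 e2 by auto
    moreover have "qpoch q (\<rho> * q^(B+1)) A \<noteq> 0" using h1 D1 by simp
    ultimately show ?thesis by simp
  qed
  have "(r*q^A - q^B)/(r-1) * (qpoch q (inverse (q^B) * r) A / qpoch q (q*r) A)
           * (qpoch q (inverse (q^A) / r) B / qpoch q (q/r) B) = q^B * K"
    unfolding e1 e2 N2 D2 D1 \<rho>_def[symmetric]
    by (rule alg6[OF nz S'0 P])
  also have "q^B * K = 1/q^(A*B)"
  proof -
    have "q^(A*B) * q^B = (q^(A+1))^B" by (simp add: power_mult[symmetric] power_add[symmetric] algebra_simps)
    thus ?thesis unfolding K_def using q0 by (simp add: field_simps power_one_over)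
  qed
  finally show ?thesis .
qed


definition dfac :: "complex \<Rightarrow> (nat \<Rightarrow> complex) \<Rightarrow> (nat \<Rightarrow> nat) \<Rightarrow> (nat \<Rightarrow> nat) \<Rightarrow> nat \<Rightarrow> nat \<Rightarrow> complex" where
  "dfac q c m x i k = qpoch q (inverse (q^(m k)) * c i / c k) (x i) / qpoch q (q * c i / c k) (x i)"

definition qdprod :: "complex \<Rightarrow> nat \<Rightarrow> (nat \<Rightarrow> complex) \<Rightarrow> (nat \<Rightarrow> nat) \<Rightarrow> (nat \<Rightarrow> nat) \<Rightarrow> complex" where
  "qdprod q p c m x = (\<Prod>i<p. \<Prod>k<p. dfac q c m x i k)"

lemma qdprod_Suc: "qdprod q (Suc p) c m x =
   qdprod q p c m x * (\<Prod>i<p. dfac q c m x i p) * (\<Prod>k<p. dfac q c m x p k) * dfac q c m x p p"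
  unfolding qdprod_def by (simp add: prod.distrib mult_ac)

lemma vdm_Suc: "vdm_quot q (Suc p) c x = vdm_quot q p c x *
   (\<Prod>i<p. (c i * q ^ x i - c p * q ^ x p) / (c i - c p))"
  unfolding vdm_quot_def by simp

lemma qq_exp2: "qq q (Suc S) * qq q (Suc n) * q^(S*n) = qq q (Suc (S+n))"
proof -
  have h1: "(\<Sum>t<Suc S. t) * 2 + Suc S = Suc S * Suc S" by (rule sum_lt_twice)
  have h2: "(\<Sum>t<Suc n. t) * 2 + Suc n = Suc n * Suc n" by (rule sum_lt_twice)
  have h3: "(\<Sum>t<Suc (S+n). t) * 2 + Suc (S+n) = Suc (S+n) * Suc (S+n)" by (rule sum_lt_twice)
  have "((\<Sum>t<Suc S. t) + (\<Sum>t<Suc n. t) + S*n) * 2 = (\<Sum>t<Suc (S+n). t) * 2"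
    using h1 h2 h3 by (simp add: algebra_simps)
  hence E: "(\<Sum>t<Suc S. t) + (\<Sum>t<Suc n. t) + S*n = (\<Sum>t<Suc (S+n). t)" by (simp only: mult_cancel2) simp
  show ?thesis unfolding qq_pow power_add[symmetric] E ..
qed

lemma X_identity:
  fixes q :: complex
  assumes q0: "q \<noteq> 0" and q1: "norm q < 1"
  shows "(\<forall>i<p. c i \<noteq> 0) \<Longrightarrow> (\<forall>i<p. \<forall>k<p. i \<noteq> k \<longrightarrow> c i \<noteq> c k) \<Longrightarrow>
     (\<forall>i<p. \<forall>k<p. qpoch q (q * c i / c k) (m i) \<noteq> 0) \<Longrightarrow>
     vdm_quot q p c m * qdprod q p c m m = (-1)^(\<Sum>i<p. m i) / qq q (Suc (\<Sum>i<p. m i))"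
proof (induction p)
  case 0 show ?case by (simp add: vdm_quot_def qdprod_def qq_def)
next
  case (Suc p)
  define S where "S = (\<Sum>i<p. m i)"
  define n where "n = m p"
  have IH: "vdm_quot q p c m * qdprod q p c m m = (-1)^S / qq q (Suc S)"
    using Suc.IH Suc.prems unfolding S_def by auto
  have cp: "c p \<noteq> 0" using Suc.prems by auto
  have fpp: "dfac q c m m p p = (-1)^n / qq q (Suc n)"
  proof -
    have "qpoch q (inverse (q^n) * 1) n * qq q (Suc n) = (-1)^n * qpoch q (q/1) n"
      by (rule qrefl[OF q0]) simp
    moreover have "qq q (Suc n) \<noteq> 0" using q0 by (simp add: qq_def)
    moreover have "qpoch q q n \<noteq> 0" by (rule qpoch_q_nz[OF q0 q1])
    ultimately show ?thesis unfolding dfac_def n_def using cp by (simp add: field_simps)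
  qed
  have pair: "(c i * q ^ m i - c p * q ^ m p) / (c i - c p) * dfac q c m m i p * dfac q c m m p i
      = 1 / q^(m i * n)" if i: "i < p" for i
  proof -
    define r where "r = c i / c p"
    have ci: "c i \<noteq> 0" using Suc.prems i by auto
    have cd: "c i \<noteq> c p" using Suc.prems i by auto
    have r0: "r \<noteq> 0" using ci cp by (simp add: r_def)
    have r1: "r \<noteq> 1" using cd cp by (simp add: r_def)
    have h1: "qpoch q (q*r) (m i) \<noteq> 0"
      using Suc.prems i by (auto simp: r_def)
    have e2: "q / r = q * c p / c i" by (simp add: r_def)
    have h2: "qpoch q (q/r) (m p) \<noteq> 0"
      unfolding e2 using Suc.prems i by auto
    have PI: "(r*q^(m i) - q^(m p))/(r-1) * (qpoch q (inverse (q^(m p)) * r) (m i) / qpoch q (q*r) (m i))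
           * (qpoch q (inverse (q^(m i)) / r) (m p) / qpoch q (q/r) (m p)) = 1/q^(m i * m p)"
      by (rule pair_id[OF q0 r0 r1 h1 h2])
    have a1: "(r*q^(m i) - q^(m p))/(r-1) = (c i * q ^ m i - c p * q ^ m p) / (c i - c p)"
      using cp cd by (simp add: r_def field_simps)
    have a2: "inverse (q^(m p)) * r = inverse (q^(m p)) * c i / c p" by (simp add: r_def)
    have a3: "q * r = q * c i / c p" by (simp add: r_def)
    have a4: "inverse (q^(m i)) / r = inverse (q^(m i)) * c p / c i" by (simp add: r_def)
    show ?thesis using PI unfolding a1 a2 a3 a4 e2 dfac_def n_def by (simp add: mult_ac)
  qed
  have "vdm_quot q (Suc p) c m * qdprod q (Suc p) c m m
      = (vdm_quot q p c m * qdprod q p c m m)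
        * (\<Prod>i<p. (c i * q ^ m i - c p * q ^ m p) / (c i - c p) * dfac q c m m i p * dfac q c m m p i)
        * dfac q c m m p p"
  proof -
    have "(\<Prod>i<p. (c i * q ^ m i - c p * q ^ m p) / (c i - c p) * dfac q c m m i p * dfac q c m m p i)
       = (\<Prod>i<p. (c i * q ^ m i - c p * q ^ m p) / (c i - c p)) * (\<Prod>i<p. dfac q c m m i p) * (\<Prod>i<p. dfac q c m m p i)"
      by (simp only: prod.distrib)
    thus ?thesis unfolding vdm_Suc qdprod_Suc by (simp only: mult_ac)
  qed
  also have "\<dots> = (-1)^S / qq q (Suc S) * (\<Prod>i<p. 1 / q^(m i * n)) * ((-1)^n / qq q (Suc n))"
    unfolding IH fpp using pair by simp
  also have "(\<Prod>i<p. 1 / q^(m i * n)) = 1 / q^(S*n)"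
    by (simp add: S_def prod_dividef power_sum sum_distrib_right)
  also have "(-1)^S / qq q (Suc S) * (1 / q^(S*n)) * ((-1)^n / qq q (Suc n)) = (-1)^(S+n) / qq q (Suc (S+n))"
    unfolding qq_exp2[symmetric] by (simp add: power_add field_simps)
  finally show ?case by (simp add: S_def n_def)
qed


definition Srest :: "complex \<Rightarrow> nat \<Rightarrow> (nat \<Rightarrow> complex) \<Rightarrow> (nat \<Rightarrow> nat) \<Rightarrow> complex \<Rightarrow> complex \<Rightarrow> (nat \<Rightarrow> nat) \<Rightarrow> complex" where
  "Srest q p c m b d x = vdm_quot q p c x * q^(\<Sum>i<p. x i)
     * (\<Prod>i<p. qpoch q (c i / b) (x i) / (qpoch q (c i) (x i) * qpoch q (q * c i / d) (x i)))
     * qdprod q p c m x"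

definition prefR :: "complex \<Rightarrow> nat \<Rightarrow> (nat \<Rightarrow> complex) \<Rightarrow> (nat \<Rightarrow> nat) \<Rightarrow> complex \<Rightarrow> complex" where
  "prefR q p c m d = (\<Prod>i<p. qpoch q (inverse (q^(m i)) * d / c i) (m i))"

definition boxs :: "nat \<Rightarrow> (nat \<Rightarrow> nat) \<Rightarrow> (nat \<Rightarrow> nat) set" where
  "boxs p m = Pi\<^sub>E {..<p} (\<lambda>i. {0..m i})"

definition Rq :: "complex \<Rightarrow> nat \<Rightarrow> (nat \<Rightarrow> complex) \<Rightarrow> (nat \<Rightarrow> nat) \<Rightarrow> complex \<Rightarrow> complex \<Rightarrow> complex \<Rightarrow> complex" where
  "Rq q p c m a b d = prefR q p c m d *
     (\<Sum>x\<in>boxs p m. (\<Prod>i<p. qpoch q (c i / a) (x i)) * Srest q p c m b d x)"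

definition polyR :: "complex \<Rightarrow> nat \<Rightarrow> (nat \<Rightarrow> complex) \<Rightarrow> (nat \<Rightarrow> nat) \<Rightarrow> complex \<Rightarrow> complex \<Rightarrow> complex poly" where
  "polyR q p c m b d = smult (prefR q p c m d)
     (\<Sum>x\<in>boxs p m. smult (Srest q p c m b d x) (\<Prod>i<p. lpoly q (c i) (x i)))"

lemma finite_boxs: "finite (boxs p m)"
  unfolding boxs_def by (intro finite_PiE) auto

lemma poly_polyR: "poly (polyR q p c m b d) (1/a) = Rq q p c m a b d"
  unfolding polyR_def Rq_def poly_smult poly_sum poly_prod poly_lpoly
  by (simp add: mult_ac)

lemma coeff_prod_le:
  fixes P :: "'i \<Rightarrow> 'a::comm_ring_1 poly"
  assumes "finite I" "\<And>i. i \<in> I \<Longrightarrow> degree (P i) \<le> n i"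
  shows "degree (\<Prod>i\<in>I. P i) \<le> (\<Sum>i\<in>I. n i) \<and> coeff (\<Prod>i\<in>I. P i) (\<Sum>i\<in>I. n i) = (\<Prod>i\<in>I. coeff (P i) (n i))"
  using assms
proof (induction I rule: finite_induct)
  case empty show ?case by simp
next
  case (insert a F)
  have dF: "degree (\<Prod>i\<in>F. P i) \<le> (\<Sum>i\<in>F. n i)" and cF: "coeff (\<Prod>i\<in>F. P i) (\<Sum>i\<in>F. n i) = (\<Prod>i\<in>F. coeff (P i) (n i))"
    using insert by auto
  have da: "degree (P a) \<le> n a" using insert by auto
  have "degree (P a * (\<Prod>i\<in>F. P i)) \<le> n a + (\<Sum>i\<in>F. n i)"
    using degree_mult_le[of "P a" "\<Prod>i\<in>F. P i"] da dF by linarith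
  moreover have "coeff (P a * (\<Prod>i\<in>F. P i)) (n a + (\<Sum>i\<in>F. n i)) = coeff (P a) (n a) * (\<Prod>i\<in>F. coeff (P i) (n i))"
    using coeff_mult_le[OF da dF] cF by simp
  ultimately show ?case using insert by simp
qed

lemma boxs_le: "x \<in> boxs p m \<Longrightarrow> i < p \<Longrightarrow> x i \<le> m i"
  unfolding boxs_def by (auto simp: PiE_iff)

lemma degree_prod_lpoly:
  fixes p :: nat and c :: "nat \<Rightarrow> complex" and x :: "nat \<Rightarrow> nat"
  shows "degree (\<Prod>i<p. lpoly q (c i) (x i)) \<le> (\<Sum>i<p. x i)"
proof -
  have "degree (\<Prod>i<p. lpoly q (c i) (x i)) \<le> (\<Sum>i<p. x i) \<and> coeff (\<Prod>i<p. lpoly q (c i) (x i)) (\<Sum>i<p. x i) = (\<Prod>i<p. coeff (lpoly q (c i) (x i)) (x i))"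
    by (rule coeff_prod_le) (simp_all add: degree_lpoly)
  thus ?thesis by simp
qed

lemma coeff_prod_lpoly:
  fixes p :: nat and c :: "nat \<Rightarrow> complex" and x :: "nat \<Rightarrow> nat"
  shows "coeff (\<Prod>i<p. lpoly q (c i) (x i)) (\<Sum>i<p. x i) = (\<Prod>i<p. \<Prod>t<x i. -(c i * q^t))"
proof -
  have "degree (\<Prod>i<p. lpoly q (c i) (x i)) \<le> (\<Sum>i<p. x i) \<and> coeff (\<Prod>i<p. lpoly q (c i) (x i)) (\<Sum>i<p. x i) = (\<Prod>i<p. coeff (lpoly q (c i) (x i)) (x i))"
    by (rule coeff_prod_le) (simp_all add: degree_lpoly)
  thus ?thesis by (simp add: coeff_lpoly)
qed

lemma degree_polyR: "degree (polyR q p c m b d) \<le> (\<Sum>i<p. m i)"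
  unfolding polyR_def
proof (rule order_trans[OF degree_smult_le], rule degree_sum_le[OF finite_boxs])
  fix x assume x: "x \<in> boxs p m"
  have "degree (\<Prod>i<p. lpoly q (c i) (x i)) \<le> (\<Sum>i<p. x i)" by (rule degree_prod_lpoly)
  also have "\<dots> \<le> (\<Sum>i<p. m i)" using boxs_le[OF x] by (intro sum_mono) auto
  finally show "degree (smult (Srest q p c m b d x) (\<Prod>i<p. lpoly q (c i) (x i))) \<le> (\<Sum>i<p. m i)"
    using degree_smult_le order_trans by blast
qed

lemma vdm_cong: "(\<And>i. i < p \<Longrightarrow> x i = y i) \<Longrightarrow> vdm_quot q p c x = vdm_quot q p c y"
  unfolding vdm_quot_def by (intro prod.cong refl) auto

lemma qdprod_cong: "(\<And>i. i < p \<Longrightarrow> x i = y i) \<Longrightarrow> qdprod q p c m x = qdprod q p c m y"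
  unfolding qdprod_def dfac_def by (intro prod.cong refl) auto

lemma Srest_cong: "(\<And>i. i < p \<Longrightarrow> x i = y i) \<Longrightarrow> Srest q p c m b d x = Srest q p c m b d y"
proof -
  assume h: "\<And>i. i < p \<Longrightarrow> x i = y i"
  have "(\<Sum>i<p. x i) = (\<Sum>i<p. y i)" using h by (intro sum.cong) auto
  moreover have "(\<Prod>i<p. qpoch q (c i / b) (x i) / (qpoch q (c i) (x i) * qpoch q (q * c i / d) (x i)))
      = (\<Prod>i<p. qpoch q (c i / b) (y i) / (qpoch q (c i) (y i) * qpoch q (q * c i / d) (y i)))"
    using h by (intro prod.cong) auto
  ultimately show ?thesis unfolding Srest_def using vdm_cong[OF h] qdprod_cong[OF h] by simp
qed

lemma coeff_polyR: "coeff (polyR q p c m b d) (\<Sum>i<p. m i) =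
    prefR q p c m d * Srest q p c m b d m * (\<Prod>i<p. \<Prod>t<m i. -(c i * q^t))"
proof -
  define M where "M = (\<Sum>i<p. m i)"
  define rm where "rm = restrict m {..<p}"
  have rm: "rm \<in> boxs p m" unfolding rm_def boxs_def by (simp add: restrict_PiE_iff)
  define f where "f x = Srest q p c m b d x * coeff (\<Prod>i<p. lpoly q (c i) (x i)) M" for x
  have z: "f x = 0" if x: "x \<in> boxs p m - {rm}" for x
  proof -
    have xb: "x \<in> boxs p m" and xr: "x \<noteq> rm" using x by auto
    have "\<exists>i<p. x i \<noteq> m i"
    proof (rule ccontr)
      assume "\<not> (\<exists>i<p. x i \<noteq> m i)"
      hence "\<forall>i<p. x i = m i" by auto
      moreover have "x \<in> extensional {..<p}" using xb unfolding boxs_def by (auto simp: PiE_iff)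
      ultimately have "x = rm" unfolding rm_def by (auto simp: fun_eq_iff extensional_def)
      thus False using xr by simp
    qed
    then obtain i where i: "i < p" "x i \<noteq> m i" by blast
    have "(\<Sum>i<p. x i) < M" unfolding M_def
      using boxs_le[OF xb] i by (intro sum_strict_mono_ex1) (auto simp: le_less)
    hence "coeff (\<Prod>i<p. lpoly q (c i) (x i)) M = 0"
      using degree_prod_lpoly[where p=p and q=q and c=c and x=x] by (intro coeff_eq_0) auto
    thus ?thesis by (simp add: f_def)
  qed
  have "coeff (polyR q p c m b d) M = prefR q p c m d * (\<Sum>x\<in>boxs p m. f x)"
    unfolding polyR_def coeff_smult coeff_sum f_def ..
  also have "(\<Sum>x\<in>boxs p m. f x) = f rm + (\<Sum>x\<in>boxs p m - {rm}. f x)"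
    using rm finite_boxs by (simp add: sum.remove)
  also have "(\<Sum>x\<in>boxs p m - {rm}. f x) = 0" using z by simp
  also have "f rm = Srest q p c m b d m * (\<Prod>i<p. \<Prod>t<m i. -(c i * q^t))"
  proof -
    have "Srest q p c m b d rm = Srest q p c m b d m" by (rule Srest_cong) (simp add: rm_def)
    moreover have "(\<Prod>i<p. lpoly q (c i) (rm i)) = (\<Prod>i<p. lpoly q (c i) (m i))"
      by (intro prod.cong) (auto simp: rm_def)
    ultimately show ?thesis unfolding f_def M_def using coeff_prod_lpoly[where p=p and q=q and c=c and x=m] by simp
  qed
  finally show ?thesis by (simp add: M_def)
qed


lemma per_i:
  fixes q c d :: complex
  assumes q0: "q \<noteq> 0" and c0: "c \<noteq> 0" and d0: "d \<noteq> 0" and h: "qpoch q (q*c/d) m \<noteq> 0"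
  shows "qpoch q (inverse (q^m) * d / c) m * (\<Prod>t<m. -(c*q^t)) / qpoch q (q*c/d) m = d^m / q^m"
proof -
  have D0: "d/c \<noteq> 0" using c0 d0 by simp
  have R: "qpoch q (inverse (q^m) * (d/c)) m * qq q (Suc m) = (-(d/c))^m * qpoch q (q/(d/c)) m"
    by (rule qrefl[OF q0 D0])
  have e1: "inverse (q^m) * (d/c) = inverse (q^m) * d / c" by simp
  have e2: "q/(d/c) = q*c/d" by simp
  have pr: "(\<Prod>t<m. -(c*q^t)) = (-c)^m * qq q m"
  proof -
    have "(\<Prod>t<m. -(c*q^t)) = (\<Prod>t<m. (-c)*q^t)" by simp
    also have "\<dots> = (-c)^m * qq q m" by (simp only: prod.distrib prod_constant card_lessThan qq_def)
    finally show ?thesis .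
  qed
  have qqn: "qq q m \<noteq> 0" using q0 by (simp add: qq_def)
  have P: "qpoch q (inverse (q^m) * d / c) m = (-(d/c))^m * qpoch q (q*c/d) m / (qq q m * q^m)"
    using R unfolding e1 e2 qq_Suc using qqn q0 by (simp add: field_simps)
  have "(-(d/c))^m * (-c)^m = d^m"
  proof -
    have "(-(d/c))^m * (-c)^m = ((-(d/c)) * (-c))^m" by (rule power_mult_distrib[symmetric])
    also have "(-(d/c)) * (-c) = d" using c0 by simp
    finally show ?thesis .
  qed
  thus ?thesis unfolding P pr using h qqn q0 by (simp add: field_simps)
qed

lemma top_match:
  fixes q b d :: complex
  assumes q0: "q \<noteq> 0" and q1: "norm q < 1" and b0: "b \<noteq> 0" and d0: "d \<noteq> 0"
    and c0: "\<And>i. i < p \<Longrightarrow> c i \<noteq> 0"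
    and cd: "\<And>i k. i < p \<Longrightarrow> k < p \<Longrightarrow> i \<noteq> k \<Longrightarrow> c i \<noteq> c k"
    and h6: "\<And>i k. i < p \<Longrightarrow> k < p \<Longrightarrow> qpoch q (q * c i / c k) (m i) \<noteq> 0"
    and h5: "\<And>i. i < p \<Longrightarrow> qpoch q (q * c i / d) (m i) \<noteq> 0"
  shows "coeff (polyR q p c m b d) (\<Sum>i<p. m i) = coeff (polyF q p c m b d) (\<Sum>i<p. m i)"
proof -
  define M where "M = (\<Sum>i<p. m i)"
  have X: "vdm_quot q p c m * qdprod q p c m m = (-1)^M / qq q (Suc M)"
    unfolding M_def by (rule X_identity[OF q0 q1]) (use c0 cd h6 in auto)
  define A where "A i = qpoch q (inverse (q^(m i)) * d / c i) (m i)" for i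
  define B where "B i = qpoch q (c i / b) (m i)" for i
  define C where "C i = qpoch q (c i) (m i)" for i
  define D where "D i = qpoch q (q * c i / d) (m i)" for i
  define E where "E i = (\<Prod>t<m i. -(c i * q^t))" for i
  have AED: "A i * E i / D i = d^(m i) / q^(m i)" if "i < p" for i
    unfolding A_def E_def D_def using per_i[OF q0 c0[OF that] d0 h5[OF that]] by simp
  have "coeff (polyR q p c m b d) M = (\<Prod>i<p. A i) * (vdm_quot q p c m * q^M * (\<Prod>i<p. B i / (C i * D i))
          * qdprod q p c m m) * (\<Prod>i<p. E i)"
    using coeff_polyR[of q p c m b d] unfolding M_def prefR_def Srest_def A_def B_def C_def D_def E_def by simp
  also have "\<dots> = q^M * (vdm_quot q p c m * qdprod q p c m m) * (\<Prod>i<p. A i * E i / D i * (B i / C i))"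
  proof -
    have "(\<Prod>i<p. A i) * (\<Prod>i<p. B i / (C i * D i)) * (\<Prod>i<p. E i) = (\<Prod>i<p. A i * E i / D i * (B i / C i))"
      unfolding prod.distrib[symmetric] by (intro prod.cong refl) (simp add: divide_inverse inverse_mult_distrib mult_ac)
    moreover have "(\<Prod>i<p. A i) * (vdm_quot q p c m * q^M * (\<Prod>i<p. B i / (C i * D i))
          * qdprod q p c m m) * (\<Prod>i<p. E i) = q^M * (vdm_quot q p c m * qdprod q p c m m) *
          ((\<Prod>i<p. A i) * (\<Prod>i<p. B i / (C i * D i)) * (\<Prod>i<p. E i))"
      by (simp only: mult_ac)
    ultimately show ?thesis by simp
  qed
  also have "(\<Prod>i<p. A i * E i / D i * (B i / C i)) = (\<Prod>i<p. d^(m i) / q^(m i)) * ((\<Prod>i<p. B i) / (\<Prod>i<p. C i))"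
    using AED by (simp add: prod.distrib prod_dividef)
  also have "(\<Prod>i<p. d^(m i) / q^(m i)) = d^M / q^M"
    by (simp add: prod_dividef power_sum M_def)
  also have "q^M * (vdm_quot q p c m * qdprod q p c m m) * (d^M / q^M * ((\<Prod>i<p. B i) / (\<Prod>i<p. C i)))
      = (-1)^M * d^M / qq q (Suc M) * (\<Prod>i<p. B i) / (\<Prod>i<p. C i)"
    unfolding X using q0 by (simp add: field_simps)
  also have "\<dots> = coeff (polyF q p c m b d) M"
    unfolding M_def top_F[OF q0 b0] B_def C_def ..
  finally show ?thesis by (simp add: M_def)
qed


lemma prod_pull:
  fixes f :: "nat \<Rightarrow> complex"
  assumes "j < p"
  shows "(\<Prod>k<p. f k) = f j * (\<Prod>k\<in>{..<p}-{j}. f k)"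
  using assms by (simp add: prod.remove)

lemma sum_upd:
  fixes m :: "nat \<Rightarrow> nat" and p j :: nat
  assumes "j < p"
  shows "(\<Sum>i<p. (m(j:=s)) i) + m j = (\<Sum>i<p. m i) + (s::nat)"
proof -
  have "(\<Sum>i<p. (m(j:=s)) i) = (m(j:=s)) j + (\<Sum>i\<in>{..<p}-{j}. (m(j:=s)) i)"
    by (rule sum.remove) (use assms in auto)
  moreover have "(\<Sum>i\<in>{..<p}-{j}. (m(j:=s)) i) = (\<Sum>i\<in>{..<p}-{j}. m i)"
    by (intro sum.cong) auto
  moreover have "(\<Sum>i<p. m i) = m j + (\<Sum>i\<in>{..<p}-{j}. m i)"
    using assms by (simp add: sum.remove)
  ultimately show ?thesis by simp
qed

lemma qdprod_swap:
  fixes q :: complex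
  assumes j: "j < p"
  shows "(\<Prod>i<p. qpoch q (c i / (c j * q^s)) (x i)) * qdprod q p c m x
       = (\<Prod>i<p. qpoch q (c i / (c j * q^(m j))) (x i)) * qdprod q p c (m(j:=s)) x"
proof -
  have per: "qpoch q (c i / (c j * q^s)) (x i) * (\<Prod>k<p. dfac q c m x i k)
      = qpoch q (c i / (c j * q^(m j))) (x i) * (\<Prod>k<p. dfac q c (m(j:=s)) x i k)" for i
  proof -
    have r: "(\<Prod>k\<in>{..<p}-{j}. dfac q c m x i k) = (\<Prod>k\<in>{..<p}-{j}. dfac q c (m(j:=s)) x i k)"
      by (intro prod.cong) (auto simp: dfac_def)
    have e1: "c i / (c j * q^s) = inverse (q^s) * c i / c j" by (simp add: field_simps)
    have e2: "c i / (c j * q^(m j)) = inverse (q^(m j)) * c i / c j" by (simp add: field_simps)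
    show ?thesis unfolding prod_pull[OF j, of "dfac q c m x i"] prod_pull[OF j, of "dfac q c (m(j:=s)) x i"] r
      unfolding dfac_def e1 e2 by (simp add: mult_ac)
  qed
  show ?thesis unfolding qdprod_def prod.distrib[symmetric] using per by simp
qed

lemma Rq_swap:
  fixes q :: complex
  assumes q0: "q \<noteq> 0" and j: "j < p" and s: "s < m j" and cj0: "c j \<noteq> 0"
  shows "Rq q p c m (c j * q^s) b d = qpoch q (inverse (q^(m j)) * d / c j) (m j - s)
           * Rq q p c (m(j:=s)) (c j * q^(m j)) b d"
proof -
  define m' where "m' = m(j:=s)"
  have pref: "prefR q p c m d = qpoch q (inverse (q^(m j)) * d / c j) (m j - s) * prefR q p c m' d"
  proof -
    have "prefR q p c m d = qpoch q (inverse (q^(m j)) * d / c j) (m j) *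
        (\<Prod>i\<in>{..<p}-{j}. qpoch q (inverse (q^(m i)) * d / c i) (m i))"
      unfolding prefR_def by (rule prod_pull[OF j])
    also have "qpoch q (inverse (q^(m j)) * d / c j) (m j) =
        qpoch q (inverse (q^(m j)) * d / c j) (m j - s) * qpoch q (inverse (q^s) * d / c j) s"
    proof -
      have A: "qpoch q (inverse (q^(m j)) * d / c j) ((m j - s) + s) = qpoch q (inverse (q^(m j)) * d / c j) (m j - s)
          * qpoch q (inverse (q^(m j)) * d / c j * q^(m j - s)) s" by (rule qpoch_add)
      have E: "inverse (q^(m j)) * d / c j * q^(m j - s) = inverse (q^s) * d / c j"
      proof -
        have "q^(m j) = q^(m j - s) * q^s" using s by (simp add: power_add[symmetric])
        thus ?thesis using q0 by (simp add: field_simps)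
      qed
      have N: "(m j - s) + s = m j" using s by simp
      show ?thesis using A unfolding E N .
    qed
    also have "(\<Prod>i\<in>{..<p}-{j}. qpoch q (inverse (q^(m i)) * d / c i) (m i))
        = (\<Prod>i\<in>{..<p}-{j}. qpoch q (inverse (q^(m' i)) * d / c i) (m' i))"
      by (intro prod.cong) (auto simp: m'_def)
    also have "prefR q p c m' d = qpoch q (inverse (q^s) * d / c j) s *
        (\<Prod>i\<in>{..<p}-{j}. qpoch q (inverse (q^(m' i)) * d / c i) (m' i))"
      unfolding prefR_def using prod_pull[OF j, of "\<lambda>i. qpoch q (inverse (q^(m' i)) * d / c i) (m' i)"]
      by (simp add: m'_def)
    ultimately show ?thesis by (simp add: mult_ac)
  qed
  have sub: "boxs p m' \<subseteq> boxs p m"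
  proof
    fix x assume "x \<in> boxs p m'"
    hence "x \<in> extensional {..<p}" "\<And>i. i < p \<Longrightarrow> x i \<le> m' i" unfolding boxs_def by (auto simp: PiE_iff)
    moreover have "m' i \<le> m i" for i using s by (simp add: m'_def)
    ultimately show "x \<in> boxs p m" unfolding boxs_def PiE_iff using le_trans by fastforce
  qed
  have tm: "(\<Prod>i<p. qpoch q (c i / (c j * q^s)) (x i)) * Srest q p c m b d x
      = (\<Prod>i<p. qpoch q (c i / (c j * q^(m j))) (x i)) * Srest q p c m' b d x" for x
    unfolding Srest_def m'_def using qdprod_swap[OF j, of q c s x m] by (simp add: mult_ac)
  have zero: "(\<Prod>i<p. qpoch q (c i / (c j * q^s)) (x i)) = 0" if x: "x \<in> boxs p m - boxs p m'" for x
  proof -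
    have xj: "x j > s"
    proof (rule ccontr)
      assume "\<not> x j > s"
      hence "x j \<le> s" by simp
      moreover have "x \<in> extensional {..<p}" "\<And>i. i < p \<Longrightarrow> x i \<le> m i"
        using x unfolding boxs_def by (auto simp: PiE_iff)
      ultimately have "x \<in> boxs p m'" unfolding boxs_def PiE_iff m'_def by auto
      thus False using x by simp
    qed
    have "c j / (c j * q^s) * q^s = 1" using q0 cj0 by simp
    hence "qpoch q (c j / (c j * q^s)) (x j) = 0" unfolding qpoch_eq_0_iff using xj by blast
    thus ?thesis unfolding prod_pull[OF j] by simp
  qed
  have "(\<Sum>x\<in>boxs p m. (\<Prod>i<p. qpoch q (c i / (c j * q^s)) (x i)) * Srest q p c m b d x)
      = (\<Sum>x\<in>boxs p m'. (\<Prod>i<p. qpoch q (c i / (c j * q^s)) (x i)) * Srest q p c m b d x)"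
    using zero sub finite_boxs by (intro sum.mono_neutral_right) auto
  also have "\<dots> = (\<Sum>x\<in>boxs p m'. (\<Prod>i<p. qpoch q (c i / (c j * q^(m j))) (x i)) * Srest q p c m' b d x)"
    using tm by simp
  finally have S: "(\<Sum>x\<in>boxs p m. (\<Prod>i<p. qpoch q (c i / (c j * q^s)) (x i)) * Srest q p c m b d x)
      = (\<Sum>x\<in>boxs p m'. (\<Prod>i<p. qpoch q (c i / (c j * q^(m j))) (x i)) * Srest q p c m' b d x)" .
  show ?thesis unfolding Rq_def pref S m'_def[symmetric] by (simp add: mult_ac)
qed


lemma poly_eq_near0:
  fixes P1 P2 :: "complex poly"
  assumes dp: "\<delta> > 0" and h: "\<And>d. 0 < norm d \<Longrightarrow> norm d < \<delta> \<Longrightarrow> poly P1 d = poly P2 d"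
  shows "P1 = P2"
proof (rule ccontr)
  assume ne: "P1 \<noteq> P2"
  hence fin: "finite {x. poly (P1 - P2) x = 0}" by (intro poly_roots_finite) simp
  define f where "f n = complex_of_real (\<delta> / (real n + 2))" for n :: nat
  have inj: "inj f"
  proof (rule injI)
    fix x y assume "f x = f y"
    hence "\<delta> / (real x + 2) = \<delta> / (real y + 2)" unfolding f_def by simp
    thus "x = y" using dp by (simp add: field_simps)
  qed
  have "range f \<subseteq> {x. poly (P1 - P2) x = 0}"
  proof
    fix z assume "z \<in> range f"
    then obtain n where z: "z = f n" by auto
    have "norm z = \<bar>\<delta> / (real n + 2)\<bar>" unfolding z f_def by (rule norm_of_real)
    hence "norm z = \<delta> / (real n + 2)" using dp by simp
    moreover have "\<delta> / (real n + 2) < \<delta>"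
    proof -
      have "\<delta> / (real n + 2) \<le> \<delta> / 2" using dp by (intro divide_left_mono) auto
      thus ?thesis using dp by linarith
    qed
    moreover have "0 < \<delta> / (real n + 2)" using dp by simp
    ultimately have "poly P1 z = poly P2 z" using h[of z] by simp
    thus "z \<in> {x. poly (P1 - P2) x = 0}" by simp
  qed
  hence "finite (range f)" using fin finite_subset by blast
  thus False using inj by (simp add: finite_image_iff)
qed

definition polyFd :: "complex \<Rightarrow> nat \<Rightarrow> (nat \<Rightarrow> complex) \<Rightarrow> (nat \<Rightarrow> nat) \<Rightarrow> complex \<Rightarrow> complex \<Rightarrow> complex poly" where
  "polyFd q p c m a b = (\<Sum>k\<le>(\<Sum>i<p. m i). smult (Qc q p c m k * (qpoch q a k * qpoch q b k * (1/(a*b))^k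
      * ((-1)^k * qq q k / q^(k*k)))) (monom 1 k * lpoly q (inverse (q^(\<Sum>i<p. m i))/(a*b)) ((\<Sum>i<p. m i)-k)))"

lemma poly_polyFd: "poly (polyFd q p c m a b) d = Fq q p c m a b d"
  unfolding polyFd_def Fq_def poly_sum
proof (intro sum.cong refl)
  fix k
  define M where "M = (\<Sum>i<p. m i)"
  have e: "d * (inverse (q ^ M) / (a * b)) = d * inverse (q^M)/(a*b)" by simp
  show "poly (smult (Qc q p c m k * (qpoch q a k * qpoch q b k * (1 / (a * b)) ^ k * ((- 1) ^ k * qq q k / q ^ (k * k))))
           (monom 1 k * lpoly q (inverse (q ^ (\<Sum>i<p. m i)) / (a * b)) ((\<Sum>i<p. m i) - k))) d =
        Qc q p c m k * (qpoch q a k * qpoch q b k * (d / (a * b)) ^ k * ((- 1) ^ k * qq q k / q ^ (k * k)) *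
           qpoch q (d * inverse (q ^ (\<Sum>i<p. m i)) / (a * b)) ((\<Sum>i<p. m i) - k))"
    unfolding M_def[symmetric] poly_smult poly_mult poly_monom poly_lpoly e
    by (simp add: power_divide mult_ac)
qed

lemma lterm_swap:
  fixes q :: complex
  assumes q0: "q \<noteq> 0" and j: "j < p" and s: "s < m j" and cj0: "c j \<noteq> 0"
  shows "lterm q p c m (c j * q^s) b d = lterm q p c (m(j:=s)) (c j * q^(m j)) b d"
proof
  fix y
  define m' where "m' = m(j:=s)"
  have r: "(\<Prod>i\<in>{..<p}-{j}. qpoch q (c i * q ^ m i) y / qpoch q (c i) y)
      = (\<Prod>i\<in>{..<p}-{j}. qpoch q (c i * q ^ m' i) y / qpoch q (c i) y)"
    by (intro prod.cong) (auto simp: m'_def)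
  have P: "qpoch q (c j * q^s) y * (\<Prod>i<p. qpoch q (c i * q ^ m i) y / qpoch q (c i) y)
     = qpoch q (c j * q^(m j)) y * (\<Prod>i<p. qpoch q (c i * q ^ m' i) y / qpoch q (c i) y)"
    unfolding prod_pull[OF j, of "\<lambda>i. qpoch q (c i * q ^ m i) y / qpoch q (c i) y"]
      prod_pull[OF j, of "\<lambda>i. qpoch q (c i * q ^ m' i) y / qpoch q (c i) y"] r
    by (simp add: m'_def mult_ac)
  have su: "(\<Sum>i<p. m' i) + m j = (\<Sum>i<p. m i) + s" unfolding m'_def by (rule sum_upd[OF j])
  have Z: "d * inverse (q^(\<Sum>i<p. m i)) / (c j * q^s * b) = d * inverse (q^(\<Sum>i<p. m' i)) / (c j * q^(m j) * b)"
  proof -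
    have "q^(\<Sum>i<p. m' i) * q^(m j) = q^(\<Sum>i<p. m i) * q^s" unfolding power_add[symmetric] su ..
    thus ?thesis using q0 cj0 by (simp add: field_simps)
  qed
  show "lterm q p c m (c j * q^s) b d y = lterm q p c m' (c j * q^(m j)) b d y"
    unfolding lterm_def Z using P by (simp add: mult_ac)
qed


lemma Gq_nz:
  fixes q :: complex
  assumes q0: "q \<noteq> 0" and q1: "norm q < 1" and "norm (d/a) < 1" "norm (d/b) < 1" "norm d < 1"
    and "norm (d * inverse (q^M)/(a*b)) < 1"
  shows "Gq q M a b d \<noteq> 0"
  unfolding Gq_def using qpoch_inf_nz_small[OF q0 q1] assms by simp

lemma F_swap:
  fixes q :: complex
  assumes q0: "q \<noteq> 0" and q1: "norm q < 1" and j: "j < p" and s: "s < m j"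
    and c0: "\<And>i. i < p \<Longrightarrow> c i \<noteq> 0" and cn: "\<And>i y. i < p \<Longrightarrow> qpoch q (c i) y \<noteq> 0"
    and b0: "b \<noteq> 0"
  shows "Fq q p c m (c j * q^s) b d = qpoch q (inverse (q^(m j)) * d / c j) (m j - s)
           * Fq q p c (m(j:=s)) (c j * q^(m j)) b d"
proof -
  define a where "a = c j * q^s"
  define a' where "a' = c j * q^(m j)"
  define m' where "m' = m(j:=s)"
  define M where "M = (\<Sum>i<p. m i)"
  define M' where "M' = (\<Sum>i<p. m' i)"
  have cj0: "c j \<noteq> 0" using c0 j by auto
  have a0: "a \<noteq> 0" using cj0 q0 by (simp add: a_def)
  have a'0: "a' \<noteq> 0" using cj0 q0 by (simp add: a'_def)
  have su: "M' + m j = M + s" unfolding M'_def M_def m'_def by (rule sum_upd[OF j])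
  have Zeq: "d * inverse (q^M) / (a * b) = d * inverse (q^M') / (a' * b)" for d
  proof -
    have "q^M' * q^(m j) = q^M * q^s" unfolding power_add[symmetric] su ..
    thus ?thesis using q0 cj0 by (simp add: a_def a'_def field_simps)
  qed
  define \<delta> where "\<delta> = min 1 (min (norm a) (min (norm b) (norm q ^ M * norm a * norm b)))"
  have dp: "\<delta> > 0" using a0 b0 q0 by (simp add: \<delta>_def)
  have key: "Fq q p c m a b d = qpoch q (inverse (q^(m j)) * d / c j) (m j - s) * Fq q p c m' a' b d"
    if d0: "0 < norm d" and dd: "norm d < \<delta>" for d
  proof -
    have d1: "norm d < 1" using dd by (simp add: \<delta>_def)
    have dn: "qpoch q d n \<noteq> 0" for n
    proof -
      have "d * q^t \<noteq> 1" for t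
      proof -
        have "norm (d * q^t) \<le> norm d" using norm_q_pow_le[OF q0 q1, of t] by (simp add: norm_mult mult_left_le)
        thus ?thesis using d1 by auto
      qed
      thus ?thesis by (simp add: qpoch_eq_0_iff)
    qed
    have da: "norm (d/a) < 1"
    proof -
      have "norm d < norm a" using dd by (simp add: \<delta>_def)
      thus ?thesis using a0 by (simp add: norm_divide divide_less_eq)
    qed
    have db: "norm (d/b) < 1"
    proof -
      have "norm d < norm b" using dd by (simp add: \<delta>_def)
      thus ?thesis using b0 by (simp add: norm_divide divide_less_eq)
    qed
    have conv: "norm (d * inverse (q^M) / (a * b)) < 1"
    proof -
      have "norm d < norm q ^ M * norm a * norm b" using dd by (simp add: \<delta>_def)
      thus ?thesis using a0 b0 q0 by (simp add: norm_divide norm_mult norm_inverse norm_power divide_less_eq field_simps)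
    qed
    have conv': "norm (d * inverse (q^M') / (a' * b)) < 1" using conv Zeq by simp
    have S1: "lterm q p c m a b d sums (Gq q M a b d * Fq q p c m a b d)"
      using AN[where p=p and c=c and m=m, OF q0 q1 a0 b0 dn cn] conv unfolding M_def by simp
    have S2: "lterm q p c m' a' b d sums (Gq q M' a' b d * Fq q p c m' a' b d)"
      using AN[where p=p and c=c and m=m', OF q0 q1 a'0 b0 dn cn] conv' unfolding M'_def by simp
    have L: "lterm q p c m a b d = lterm q p c m' a' b d"
      unfolding a_def a'_def m'_def by (rule lterm_swap[where p=p and c=c and m=m, OF q0 j s cj0])
    have E: "Gq q M a b d * Fq q p c m a b d = Gq q M' a' b d * Fq q p c m' a' b d"
      using S1 S2 L sums_unique2 by metis
    have G: "Gq q M' a' b d = qpoch q (inverse (q^(m j)) * d / c j) (m j - s) * Gq q M a b d"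
    proof -
      have sp: "qpoch_inf q (d/a') = qpoch q (d/a') (m j - s) * qpoch_inf q (d/a' * q^(m j - s))"
        by (rule qpoch_inf_split[OF q0 q1])
      have e1: "d/a' * q^(m j - s) = d/a"
      proof -
        have "q^(m j) = q^(m j - s) * q^s" using s by (simp add: power_add[symmetric])
        thus ?thesis using q0 cj0 by (simp add: a_def a'_def field_simps)
      qed
      have e2: "d/a' = inverse (q^(m j)) * d / c j" by (simp add: a'_def field_simps)
      show ?thesis unfolding Gq_def Zeq[of d, symmetric] sp e1 unfolding e2 by (simp add: mult_ac)
    qed
    have Gnz: "Gq q M a b d \<noteq> 0" by (rule Gq_nz[OF q0 q1 da db d1 conv])
    show ?thesis using E Gnz unfolding G by (simp add: mult_ac)
  qed
  have "polyFd q p c m a b = lpoly q (inverse (q^(m j))/c j) (m j - s) * polyFd q p c m' a' b"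
  proof (rule poly_eq_near0[OF dp])
    fix d :: complex assume "0 < norm d" "norm d < \<delta>"
    thus "poly (polyFd q p c m a b) d = poly (lpoly q (inverse (q^(m j))/c j) (m j - s) * polyFd q p c m' a' b) d"
      unfolding poly_mult poly_polyFd poly_lpoly using key by (simp add: field_simps)
  qed
  hence "poly (polyFd q p c m a b) d = poly (lpoly q (inverse (q^(m j))/c j) (m j - s) * polyFd q p c m' a' b) d"
    by simp
  thus ?thesis unfolding poly_mult poly_polyFd poly_lpoly a_def a'_def m'_def by (simp add: field_simps)
qed


lemma poly_zero_roots:
  fixes P :: "complex poly"
  assumes dg: "degree P \<le> M" and cf: "coeff P M = 0" and fS: "finite S" and cS: "card S = M"
    and rt: "\<And>x. x \<in> S \<Longrightarrow> poly P x = 0"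
  shows "P = 0"
proof (rule ccontr)
  assume P0: "P \<noteq> 0"
  have "degree P \<noteq> M" using cf P0 by auto
  hence lt: "degree P < M" using dg by simp
  have "S \<subseteq> {x. poly P x = 0}" using rt by auto
  hence "card S \<le> card {x. poly P x = 0}" using poly_roots_finite[OF P0] by (rule card_mono[rotated])
  also have "\<dots> \<le> degree P" by (rule card_poly_roots_bound[OF P0])
  finally show False using lt cS by simp
qed

lemma roots_helper:
  fixes q :: complex
  assumes q0: "q \<noteq> 0" and q1: "norm q < 1" and i: "i < p" and j: "j < p"
    and c0: "\<And>i. i < p \<Longrightarrow> c i \<noteq> 0"
    and h6: "\<And>i k x. i < p \<Longrightarrow> k < p \<Longrightarrow> x \<le> m i \<Longrightarrow> qpoch q (q * c i / c k) x \<noteq> 0"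
    and e: "c j * q^s = c i * q^t" and st: "s < t" and tm: "t < m i"
  shows False
proof -
  define l where "l = t - s"
  have l0: "l > 0" using st by (simp add: l_def)
  have "q^t = q^s * q^l" using st by (simp add: l_def power_add[symmetric])
  hence cj: "c j = c i * q^l" using e q0 by (simp add: field_simps)
  show False
  proof (cases "i = j")
    case True
    hence "c i * 1 = c i * q^l" using cj by simp
    hence "q^l = 1" using c0[OF i] mult_left_cancel[of "c i" 1 "q^l"] by simp
    thus False using q_pow_neq_1[OF q0 q1 l0] by simp
  next
    case False
    have "qpoch q (q * c i / c j) l = 0"
    proof -
      have "q * c i / c j * q^(l - 1) = 1"
      proof -
        have "q * q^(l-1) = q^l" using l0 by (simp add: power_Suc[symmetric])
        thus ?thesis unfolding cj using c0[OF i] q0 by (simp add: field_simps)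
      qed
      moreover have "l - 1 < l" using l0 by simp
      ultimately show ?thesis unfolding qpoch_eq_0_iff by blast
    qed
    moreover have "l \<le> m i" using tm st by (simp add: l_def)
    ultimately show False using h6[OF i j] by blast
  qed
qed

lemma roots_inj:
  fixes q :: complex
  assumes q0: "q \<noteq> 0" and q1: "norm q < 1"
    and c0: "\<And>i. i < p \<Longrightarrow> c i \<noteq> 0"
    and cd: "\<And>i k. i < p \<Longrightarrow> k < p \<Longrightarrow> i \<noteq> k \<Longrightarrow> c i \<noteq> c k"
    and h6: "\<And>i k x. i < p \<Longrightarrow> k < p \<Longrightarrow> x \<le> m i \<Longrightarrow> qpoch q (q * c i / c k) x \<noteq> 0"
  shows "inj_on (\<lambda>(j,s). 1/(c j * q^s)) (Sigma {..<p} (\<lambda>j. {..<m j}))"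
proof (rule inj_onI, clarify)
  fix j s i t assume j: "j < p" and s: "s < m j" and i: "i < p" and t: "t < m i"
    and eq: "1/(c j * q^s) = 1/(c i * q^t)"
  have e: "c j * q^s = c i * q^t" using eq c0[OF i] c0[OF j] q0 by (simp add: field_simps)
  show "j = i \<and> s = t"
  proof (cases s t rule: linorder_cases)
    case less
    thus ?thesis using roots_helper[where p=p and c=c and m=m, OF q0 q1 i j c0 h6 e less t] by simp
  next
    case equal
    hence "c j = c i" using e q0 by simp
    hence "j = i" using cd[OF j i] by blast
    thus ?thesis using equal by simp
  next
    case greater
    thus ?thesis using roots_helper[where p=p and c=c and m=m, OF q0 q1 j i c0 h6 e[symmetric] greater s] by simp
  qed
qed

theorem Psi:
  fixes q d :: complex and p :: nat and c :: "nat \<Rightarrow> complex"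
  assumes q0: "q \<noteq> 0" and q1: "norm q < 1" and d0: "d \<noteq> 0"
    and c0: "\<And>i. i < p \<Longrightarrow> c i \<noteq> 0"
    and cd: "\<And>i k. i < p \<Longrightarrow> k < p \<Longrightarrow> i \<noteq> k \<Longrightarrow> c i \<noteq> c k"
    and cn: "\<And>i y. i < p \<Longrightarrow> qpoch q (c i) y \<noteq> 0"
  shows "(\<And>i x. i < p \<Longrightarrow> x \<le> m i \<Longrightarrow> qpoch q (q * c i / d) x \<noteq> 0) \<Longrightarrow>
         (\<And>i k x. i < p \<Longrightarrow> k < p \<Longrightarrow> x \<le> m i \<Longrightarrow> qpoch q (q * c i / c k) x \<noteq> 0) \<Longrightarrow>
         a \<noteq> 0 \<Longrightarrow> b \<noteq> 0 \<Longrightarrow> Fq q p c m a b d = Rq q p c m a b d"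
proof (induction "\<Sum>i<p. m i" arbitrary: m a b rule: less_induct)
  case less
  define M where "M = (\<Sum>i<p. m i)"
  have h5: "\<And>i x. i < p \<Longrightarrow> x \<le> m i \<Longrightarrow> qpoch q (q * c i / d) x \<noteq> 0" using less.prems(1) by blast
  have h6: "\<And>i k x. i < p \<Longrightarrow> k < p \<Longrightarrow> x \<le> m i \<Longrightarrow> qpoch q (q * c i / c k) x \<noteq> 0"
    using less.prems(2) by blast
  have a0: "a \<noteq> 0" and b0: "b \<noteq> 0" using less.prems(3,4) by auto
  define P where "P = polyF q p c m b d - polyR q p c m b d"
  have dP: "degree P \<le> M" unfolding P_def M_def
    by (intro degree_diff_le degree_polyF degree_polyR)
  have cP: "coeff P M = 0"
    unfolding P_def M_def coeff_diff
    using top_match[where m=m, OF q0 q1 b0 d0 c0 cd] h5 h6 by simp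
  define S where "S = (\<lambda>(j,s). 1/(c j * q^s)) ` (Sigma {..<p} (\<lambda>j. {..<m j}))"
  have fS: "finite S" unfolding S_def by simp
  have cS: "card S = M"
  proof -
    have "card S = card (Sigma {..<p} (\<lambda>j. {..<m j}))"
      unfolding S_def by (rule card_image[OF roots_inj[OF q0 q1 c0 cd h6]])
    also have "\<dots> = M" by (simp add: M_def)
    finally show ?thesis .
  qed
  have rt: "poly P z = 0" if z: "z \<in> S" for z
  proof -
    obtain j s where j: "j < p" and s: "s < m j" and zz: "z = 1/(c j * q^s)"
      using z unfolding S_def by auto
    define m' where "m' = m(j:=s)"
    have cj0: "c j \<noteq> 0" using c0 j by simp
    have aj: "c j * q^s \<noteq> 0" using cj0 q0 by simp
    have aj': "c j * q^(m j) \<noteq> 0" using cj0 q0 by simp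
    have lessM: "(\<Sum>i<p. m' i) < (\<Sum>i<p. m i)"
      using sum_upd[OF j, of m s] s unfolding m'_def by simp
    have le: "m' i \<le> m i" for i using s by (simp add: m'_def)
    have IH: "Fq q p c m' (c j * q^(m j)) b d = Rq q p c m' (c j * q^(m j)) b d"
    proof (rule less.hyps[OF lessM])
      show "\<And>i x. i < p \<Longrightarrow> x \<le> m' i \<Longrightarrow> qpoch q (q * c i / d) x \<noteq> 0"
        using h5 le order_trans by blast
      show "\<And>i k x. i < p \<Longrightarrow> k < p \<Longrightarrow> x \<le> m' i \<Longrightarrow> qpoch q (q * c i / c k) x \<noteq> 0"
        using h6 le order_trans by blast
    qed (use aj' b0 in auto)
    have "poly (polyF q p c m b d) z = Fq q p c m (c j * q^s) b d"
      unfolding zz by (rule poly_polyF[OF aj b0])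
    also have "\<dots> = qpoch q (inverse (q^(m j)) * d / c j) (m j - s) * Fq q p c m' (c j * q^(m j)) b d"
      unfolding m'_def by (rule F_swap[where p=p and c=c and m=m, OF q0 q1 j s c0 cn b0])
    also have "\<dots> = qpoch q (inverse (q^(m j)) * d / c j) (m j - s) * Rq q p c m' (c j * q^(m j)) b d"
      unfolding IH ..
    also have "\<dots> = Rq q p c m (c j * q^s) b d"
      unfolding m'_def by (rule Rq_swap[where p=p and c=c and m=m, OF q0 j s cj0, symmetric])
    also have "\<dots> = poly (polyR q p c m b d) z"
      unfolding zz by (rule poly_polyR[symmetric])
    finally show ?thesis by (simp add: P_def)
  qed
  have "P = 0" by (rule poly_zero_roots[OF dP cP fS cS rt])
  hence "poly (polyF q p c m b d) (1/a) = poly (polyR q p c m b d) (1/a)" by (simp add: P_def)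
  thus ?case unfolding poly_polyF[OF a0 b0] poly_polyR .
qed


theorem corollary4p14:
  fixes q a b d :: complex and p :: nat and c :: "nat \<Rightarrow> complex" and m :: "nat \<Rightarrow> nat"
  defines "M \<equiv> (\<Sum>i<p. m i)"
  assumes q: "0 < norm q" "norm q < 1"
    and nz: "a \<noteq> 0" "b \<noteq> 0" "d \<noteq> 0" "\<And>i. i < p \<Longrightarrow> c i \<noteq> 0"
    and cdist: "\<And>i j. i < p \<Longrightarrow> j < p \<Longrightarrow> i \<noteq> j \<Longrightarrow> c i \<noteq> c j"
    and dn1: "\<And>y. qpoch q d y \<noteq> 0"
    and dn2: "\<And>i y. i < p \<Longrightarrow> qpoch q (c i) y \<noteq> 0"
    and dn3: "qpoch_inf q d \<noteq> 0"
    and dn4: "qpoch_inf q (q powi (- int M) * d / (a * b)) \<noteq> 0"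
    and dn5: "\<And>i x. i < p \<Longrightarrow> x \<le> m i \<Longrightarrow> qpoch q (q * c i / d) x \<noteq> 0"
    and dn6: "\<And>i k x. i < p \<Longrightarrow> k < p \<Longrightarrow> x \<le> m i \<Longrightarrow> qpoch q (q * c i / c k) x \<noteq> 0"
    and conv: "norm (d * q powi (- int M) / (a * b)) < 1"
  shows "(\<lambda>y. qpoch q a y * qpoch q b y / (qpoch q q y * qpoch q d y)
            * (\<Prod>i<p. qpoch q (c i * q ^ m i) y / qpoch q (c i) y)
            * (d * q powi (- int M) / (a * b)) ^ y)
    sums (qpoch_inf q (d / a) * qpoch_inf q (d / b)
            / (qpoch_inf q d * qpoch_inf q (q powi (- int M) * d / (a * b)))
          * (\<Prod>i<p. qpoch q (q powi (- int (m i)) * d / c i) (m i))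
          * (\<Sum>x\<in>Pi\<^sub>E {..<p} (\<lambda>i. {0..m i}).
               vdm_quot q p c x * q ^ (\<Sum>i<p. x i)
               * (\<Prod>i<p. qpoch q (c i / a) (x i) * qpoch q (c i / b) (x i)
                    / (qpoch q (c i) (x i) * qpoch q (q * c i / d) (x i)))
               * (\<Prod>i<p. \<Prod>k<p. qpoch q (q powi (- int (m k)) * c i / c k) (x i)
                    / qpoch q (q * c i / c k) (x i))))"
proof -
  have q0: "q \<noteq> 0" using q by auto
  have q1: "norm q < 1" using q by auto
  have pw: "q powi (- int n) = inverse (q^n)" for n by (simp add: power_int_minus)
  have c0: "\<And>i. i < p \<Longrightarrow> c i \<noteq> 0" using nz(4) by blast
  have LHS: "(\<lambda>y. qpoch q a y * qpoch q b y / (qpoch q q y * qpoch q d y)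
            * (\<Prod>i<p. qpoch q (c i * q ^ m i) y / qpoch q (c i) y)
            * (d * q powi (- int M) / (a * b)) ^ y) = lterm q p c m a b d"
    unfolding lterm_def M_def pw ..
  have conv': "norm (d * inverse (q^(\<Sum>i<p. m i)) / (a*b)) < 1" using conv unfolding M_def pw .
  have AN1: "lterm q p c m a b d sums (Gq q (\<Sum>i<p. m i) a b d * Fq q p c m a b d)"
    by (rule AN[where p=p and c=c and m=m, OF q0 q1 nz(1) nz(2) dn1 dn2 conv'])
  have PS: "Fq q p c m a b d = Rq q p c m a b d"
    by (rule Psi[where p=p and c=c and m=m, OF q0 q1 nz(3) c0 cdist dn2 dn5 dn6 nz(1) nz(2)])
  have G: "Gq q (\<Sum>i<p. m i) a b d = qpoch_inf q (d / a) * qpoch_inf q (d / b)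
            / (qpoch_inf q d * qpoch_inf q (q powi (- int M) * d / (a * b)))"
  proof -
    have E: "q powi (- int M) * d / (a * b) = d * inverse (q^(\<Sum>i<p. m i)) / (a*b)"
      unfolding M_def pw by simp
    show ?thesis by (simp only: E Gq_def)
  qed
  have P: "prefR q p c m d = (\<Prod>i<p. qpoch q (q powi (- int (m i)) * d / c i) (m i))"
    unfolding prefR_def pw ..
  have S: "(\<Sum>x\<in>boxs p m. (\<Prod>i<p. qpoch q (c i / a) (x i)) * Srest q p c m b d x)
     = (\<Sum>x\<in>Pi\<^sub>E {..<p} (\<lambda>i. {0..m i}).
               vdm_quot q p c x * q ^ (\<Sum>i<p. x i)
               * (\<Prod>i<p. qpoch q (c i / a) (x i) * qpoch q (c i / b) (x i)
                    / (qpoch q (c i) (x i) * qpoch q (q * c i / d) (x i)))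
               * (\<Prod>i<p. \<Prod>k<p. qpoch q (q powi (- int (m k)) * c i / c k) (x i)
                    / qpoch q (q * c i / c k) (x i)))"
    unfolding boxs_def
  proof (intro sum.cong refl)
    fix x :: "nat \<Rightarrow> nat"
    have e1: "(\<Prod>i<p. qpoch q (c i / a) (x i) * qpoch q (c i / b) (x i)
                    / (qpoch q (c i) (x i) * qpoch q (q * c i / d) (x i)))
        = (\<Prod>i<p. qpoch q (c i / a) (x i)) * (\<Prod>i<p. qpoch q (c i / b) (x i)
                    / (qpoch q (c i) (x i) * qpoch q (q * c i / d) (x i)))"
      unfolding prod.distrib[symmetric] by (simp add: mult.assoc)
    have e2: "qdprod q p c m x = (\<Prod>i<p. \<Prod>k<p. qpoch q (q powi (- int (m k)) * c i / c k) (x i)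
                    / qpoch q (q * c i / c k) (x i))"
      unfolding qdprod_def dfac_def pw ..
    show "(\<Prod>i<p. qpoch q (c i / a) (x i)) * Srest q p c m b d x =
          vdm_quot q p c x * q ^ (\<Sum>i<p. x i)
               * (\<Prod>i<p. qpoch q (c i / a) (x i) * qpoch q (c i / b) (x i)
                    / (qpoch q (c i) (x i) * qpoch q (q * c i / d) (x i)))
               * (\<Prod>i<p. \<Prod>k<p. qpoch q (q powi (- int (m k)) * c i / c k) (x i)
                    / qpoch q (q * c i / c k) (x i))"
      unfolding e1 e2[symmetric] Srest_def by (simp only: mult_ac)
  qed
  have "Gq q (\<Sum>i<p. m i) a b d * Fq q p c m a b d =
     (qpoch_inf q (d / a) * qpoch_inf q (d / b)
            / (qpoch_inf q d * qpoch_inf q (q powi (- int M) * d / (a * b))))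
          * (\<Prod>i<p. qpoch q (q powi (- int (m i)) * d / c i) (m i))
          * (\<Sum>x\<in>Pi\<^sub>E {..<p} (\<lambda>i. {0..m i}).
               vdm_quot q p c x * q ^ (\<Sum>i<p. x i)
               * (\<Prod>i<p. qpoch q (c i / a) (x i) * qpoch q (c i / b) (x i)
                    / (qpoch q (c i) (x i) * qpoch q (q * c i / d) (x i)))
               * (\<Prod>i<p. \<Prod>k<p. qpoch q (q powi (- int (m k)) * c i / c k) (x i)
                    / qpoch q (q * c i / c k) (x i)))"
    unfolding PS G Rq_def P S by (simp only: mult.assoc)
  with AN1 LHS show ?thesis by simp
qed

end
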